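(* Let $G$ be a 3-connected graph and let $\sigma$ be a star of oriented 3-separations of $G$ whose bag $X$ has exactly four vertices. Then the following are equivalent: (i) $\sigma\subseteq\tau$ for some 4-tangle $\tau$ in $G$; (ii) $X$ is cubic in $G$; (iii) $X$ is cubic in $G$, and for every standard cube-minor $\varphi\colon G\succcurlyeq Q$ at $X$, the $\varphi$-lift to $G$ of the unique 4-tangle of the cube $Q$ contains $\sigma$.
   Context: All graphs are finite and simple. A separation of $G$ is an unordered pair $\{A,B\}$ with $A\cup B=V(G)$ and no edge between $A\setminus B$ and $B\setminus A$; its order is $|A\cap B|$; a $k$-separation has order exactly $k$. For oriented separations, $(A,B)\le(C,D)$ means $A\subseteq C$ and $B\supseteq D$. A star is a set $\sigma$ of oriented separations such that $(A,B)\le(D,C)$ for all distinct $(A,B),(C,D)\in\sigma$; its bag is $\bigcap_{(A,B)\in\sigma}B$ (equal to $V(G)$ if $\sigma=\emptyset$). A $k$-tangle in $G$ is a set $\tau$ of oriented separations of order $<k$ containing exactly one orientation of each separation of order $<k$, with no $(A_i,B_i)\in\tau$ ($i=1,2,3$) satisfying $G[A_1]\cup G[A_2]\cup G[A_3]=G$. A minor-map $\varphi\colon G\succcurlyeq H$ is a pair $(U,f)$, $U\subseteq V(G)$, $f\colon U\to V(H)$ surjective, whose fibres (branch sets) $\varphi^{-1}(x)$ induce connected subgraphs and such that every edge $xy$ of $H$ is witnessed by an edge of $G$ between $\varphi^{-1}(x)$ and $\varphi^{-1}(y)$. For an oriented separation $(A,B)$ of $G$, $\varphi(A,B)=(A_\varphi,B_\varphi)$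 where $A_\varphi$ (resp. $B_\varphi$) is the set of vertices of $H$ whose branch set meets $A$ (resp. $B$). The $\varphi$-lift to $G$ of a $k$-tangle $\tau_H$ of $H$ is the set of oriented separations $s$ of $G$ of order $<k$ with $\varphi(s)\in\tau_H$. The cube $Q$ is the graph of the 3-dimensional cube; it is bipartite with classes $A_Q,B_Q$ of size four, and each $a\in A_Q$ is non-adjacent to exactly one $b\in B_Q$. The cube has exactly one 4-tangle. A set $X$ of four vertices of $G$ is cubic in $G$ if the set of neighbourhoods of the components of $G-X$ equals the set of all 3-element subsets of $X$. A standard cube-minor at a cubic set $X$ is a minor-map $\varphi\colon G\succcurlyeq Q$ for which there is a bijection $b\mapsto x_b$ from $B_Q$ to $X$ with $\varphi^{-1}(b)=\{x_b\}$ for $b\in B_Q$, and for each $a\in A_Q$ the branch set $\varphi^{-1}(a)$ is the vertex set of a component of $G-X$ whose neighbourhood is $X\setminus\{x_b\}$, where $b$ is the unique vertex of $B_Q$ not adjacent to $a$. *)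

theory Defs
  imports Main
begin

definition graph :: "'a set \<Rightarrow> ('a \<Rightarrow> 'a \<Rightarrow> bool) \<Rightarrow> bool" where
  "graph V E \<longleftrightarrow> finite V \<and> (\<forall>u v. E u v \<longrightarrow> u \<in> V \<and> v \<in> V)
     \<and> (\<forall>u v. E u v \<longrightarrow> E v u) \<and> (\<forall>u. \<not> E u u)"

definition connected_in :: "('a \<Rightarrow> 'a \<Rightarrow> bool) \<Rightarrow> 'a set \<Rightarrow> bool" where
  "connected_in E C \<longleftrightarrow> C \<noteq> {} \<and>
     (\<forall>u\<in>C. \<forall>v\<in>C. (\<lambda>x y. E x y \<and> x \<in> C \<and> y \<in> C)\<^sup>*\<^sup>* u v)"

definition k_connected :: "nat \<Rightarrow> 'a set \<Rightarrow> ('a \<Rightarrow> 'a \<Rightarrow> bool) \<Rightarrow> bool" where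
  "k_connected k V E \<longleftrightarrow> card V > k \<and>
     (\<forall>S. S \<subseteq> V \<and> card S < k \<longrightarrow> connected_in E (V - S))"

definition is_sep :: "'a set \<Rightarrow> ('a \<Rightarrow> 'a \<Rightarrow> bool) \<Rightarrow> 'a set \<Rightarrow> 'a set \<Rightarrow> bool" where
  "is_sep V E A B \<longleftrightarrow> A \<union> B = V \<and>
     (\<forall>u v. u \<in> A - B \<and> v \<in> B - A \<longrightarrow> \<not> E u v)"

definition sep_order :: "'a set \<times> 'a set \<Rightarrow> nat" where
  "sep_order s = card (fst s \<inter> snd s)"

definition osep_le :: "'a set \<times> 'a set \<Rightarrow> 'a set \<times> 'a set \<Rightarrow> bool" where
  "osep_le s t \<longleftrightarrow> fst s \<subseteq> fst t \<and> snd t \<subseteq> snd s"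

definition is_star :: "('a set \<times> 'a set) set \<Rightarrow> bool" where
  "is_star \<sigma> \<longleftrightarrow> (\<forall>A B C D. (A, B) \<in> \<sigma> \<and> (C, D) \<in> \<sigma> \<and> (A, B) \<noteq> (C, D)
       \<longrightarrow> osep_le (A, B) (D, C))"

definition bag :: "'a set \<Rightarrow> ('a set \<times> 'a set) set \<Rightarrow> 'a set" where
  "bag V \<sigma> = V \<inter> \<Inter> (snd ` \<sigma>)"

definition is_tangle :: "'a set \<Rightarrow> ('a \<Rightarrow> 'a \<Rightarrow> bool) \<Rightarrow> nat \<Rightarrow> ('a set \<times> 'a set) set \<Rightarrow> bool" where
  "is_tangle V E k \<tau> \<longleftrightarrow>
     (\<forall>s\<in>\<tau>. is_sep V E (fst s) (snd s) \<and> sep_order s < k) \<and>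
     (\<forall>A B. is_sep V E A B \<and> card (A \<inter> B) < k \<longrightarrow>
        ((A, B) \<in> \<tau> \<or> (B, A) \<in> \<tau>) \<and> ((A, B) \<in> \<tau> \<and> (B, A) \<in> \<tau> \<longrightarrow> A = B)) \<and>
     \<not> (\<exists>A1 B1 A2 B2 A3 B3. (A1, B1) \<in> \<tau> \<and> (A2, B2) \<in> \<tau> \<and> (A3, B3) \<in> \<tau> \<and>
          A1 \<union> A2 \<union> A3 = V \<and>
          (\<forall>u v. E u v \<longrightarrow> (u \<in> A1 \<and> v \<in> A1) \<or> (u \<in> A2 \<and> v \<in> A2) \<or> (u \<in> A3 \<and> v \<in> A3)))"

text \<open>Minor-map (U,f) : G \<succeq> H.  Branch set of x is {u \<in> U. f u = x}.\<close>
definition minor_map :: "'a set \<Rightarrow> ('a \<Rightarrow> 'a \<Rightarrow> bool) \<Rightarrow> 'b set \<Rightarrow> ('b \<Rightarrow> 'b \<Rightarrow> bool)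
    \<Rightarrow> 'a set \<Rightarrow> ('a \<Rightarrow> 'b) \<Rightarrow> bool" where
  "minor_map V E VH EH U f \<longleftrightarrow> U \<subseteq> V \<and> f ` U = VH \<and>
     (\<forall>x\<in>VH. connected_in E {u\<in>U. f u = x}) \<and>
     (\<forall>x y. EH x y \<longrightarrow> (\<exists>u v. u \<in> U \<and> v \<in> U \<and> f u = x \<and> f v = y \<and> E u v))"

text \<open>phi(A,B) = (A_phi, B_phi): vertices of H whose branch sets meet A, resp. B.\<close>
definition minor_image :: "'a set \<Rightarrow> ('a \<Rightarrow> 'b) \<Rightarrow> 'a set \<times> 'a set \<Rightarrow> 'b set \<times> 'b set" where
  "minor_image U f s = (f ` (U \<inter> fst s), f ` (U \<inter> snd s))"

definition lift :: "'a set \<Rightarrow> ('a \<Rightarrow> 'a \<Rightarrow> bool) \<Rightarrow> 'a set \<Rightarrow> ('a \<Rightarrow> 'b) \<Rightarrow> nat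
    \<Rightarrow> ('b set \<times> 'b set) set \<Rightarrow> ('a set \<times> 'a set) set" where
  "lift V E U f k \<tau>H = {s. is_sep V E (fst s) (snd s) \<and> sep_order s < k \<and> minor_image U f s \<in> \<tau>H}"

definition nbhd :: "'a set \<Rightarrow> ('a \<Rightarrow> 'a \<Rightarrow> bool) \<Rightarrow> 'a set \<Rightarrow> 'a set" where
  "nbhd V E C = {v \<in> V - C. \<exists>u\<in>C. E u v}"

definition is_component :: "'a set \<Rightarrow> ('a \<Rightarrow> 'a \<Rightarrow> bool) \<Rightarrow> 'a set \<Rightarrow> 'a set \<Rightarrow> bool" where
  "is_component V E X C \<longleftrightarrow> C \<subseteq> V - X \<and> connected_in E C \<and>
     (\<forall>D. C \<subseteq> D \<and> D \<subseteq> V - X \<and> connected_in E D \<longrightarrow> D = C)"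

definition cubic :: "'a set \<Rightarrow> ('a \<Rightarrow> 'a \<Rightarrow> bool) \<Rightarrow> 'a set \<Rightarrow> bool" where
  "cubic V E X \<longleftrightarrow> X \<subseteq> V \<and> card X = 4 \<and>
     {nbhd V E C | C. is_component V E X C} = {S. S \<subseteq> X \<and> card S = 3}"

type_synonym cube_vertex = "bool \<times> bool \<times> bool"

definition cube_V :: "cube_vertex set" where
  "cube_V = UNIV"

definition cube_E :: "cube_vertex \<Rightarrow> cube_vertex \<Rightarrow> bool" where
  "cube_E v w \<longleftrightarrow> (case v of (a, b, c) \<Rightarrow> case w of (a', b', c') \<Rightarrow>
      (a \<noteq> a' \<and> b = b' \<and> c = c') \<or> (a = a' \<and> b \<noteq> b' \<and> c = c') \<or> (a = a' \<and> b = b' \<and> c \<noteq> c'))"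

text \<open>Bipartition classes: A_Q = even number of True coordinates, B_Q = the rest.\<close>
definition cube_A :: "cube_vertex set" where
  "cube_A = {(False, False, False), (True, True, False), (True, False, True), (False, True, True)}"

definition cube_B :: "cube_vertex set" where
  "cube_B = cube_V - cube_A"

definition std_cube_minor :: "'a set \<Rightarrow> ('a \<Rightarrow> 'a \<Rightarrow> bool) \<Rightarrow> 'a set
    \<Rightarrow> 'a set \<Rightarrow> ('a \<Rightarrow> cube_vertex) \<Rightarrow> bool" where
  "std_cube_minor V E X U f \<longleftrightarrow> minor_map V E cube_V cube_E U f \<and>
     (\<exists>g. bij_betw g cube_B X \<and>
        (\<forall>b\<in>cube_B. {u\<in>U. f u = b} = {g b}) \<and>
        (\<forall>a\<in>cube_A. \<forall>b\<in>cube_B. \<not> cube_E a b \<longrightarrow>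
            is_component V E X {u\<in>U. f u = a} \<and> nbhd V E {u\<in>U. f u = a} = X - {g b}))"

end

theory Submission
  imports Defs
begin

abbreviation RR :: "('a \<Rightarrow> 'a \<Rightarrow> bool) \<Rightarrow> 'a set \<Rightarrow> 'a \<Rightarrow> 'a \<Rightarrow> bool" where
  "RR E C \<equiv> (\<lambda>x y. E x y \<and> x \<in> C \<and> y \<in> C)"

lemma rtr_mono: "(RR E C)\<^sup>*\<^sup>* x y \<Longrightarrow> C \<subseteq> D \<Longrightarrow> (RR E D)\<^sup>*\<^sup>* x y"
  by (induction rule: rtranclp_induct) (auto intro: rtranclp.rtrancl_into_rtrancl)

lemma rtr_sym: "(RR E C)\<^sup>*\<^sup>* x y \<Longrightarrow> (\<forall>u v. E u v \<longrightarrow> E v u) \<Longrightarrow> (RR E C)\<^sup>*\<^sup>* y x"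
proof (induction rule: rtranclp_induct)
  case base then show ?case by simp
next
  case (step y z)
  have "RR E C z y" using step by auto
  moreover have "(RR E C)\<^sup>*\<^sup>* y x" using step by auto
  ultimately show ?case by (rule converse_rtranclp_into_rtranclp)
qed

lemma rtr_inv: "(RR E C)\<^sup>*\<^sup>* x y \<Longrightarrow> x \<in> P \<Longrightarrow>
   (\<And>u w. u \<in> P \<Longrightarrow> u \<in> C \<Longrightarrow> w \<in> C \<Longrightarrow> E u w \<Longrightarrow> w \<in> P) \<Longrightarrow> y \<in> P"
  by (induction rule: rtranclp_induct) auto

lemma rtr_in: "(RR E C)\<^sup>*\<^sup>* x y \<Longrightarrow> x \<in> C \<Longrightarrow> y \<in> C"
  by (induction rule: rtranclp_induct) auto

lemma conn_union:
  assumes sym: "\<forall>u v. E u v \<longrightarrow> E v u" and c1: "connected_in E C1" and c2: "connected_in E C2"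
    and ne: "C1 \<inter> C2 \<noteq> {}"
  shows "connected_in E (C1 \<union> C2)"
proof -
  obtain z where z: "z \<in> C1" "z \<in> C2" using ne by auto
  have to: "(RR E (C1 \<union> C2))\<^sup>*\<^sup>* u z" if "u \<in> C1 \<union> C2" for u
  proof (cases "u \<in> C1")
    case True
    then have "(RR E C1)\<^sup>*\<^sup>* u z" using c1 z unfolding connected_in_def by blast
    then show ?thesis by (rule rtr_mono) auto
  next
    case False
    then have "(RR E C2)\<^sup>*\<^sup>* u z" using c2 z that unfolding connected_in_def by blast
    then show ?thesis by (rule rtr_mono) auto
  qed
  show ?thesis unfolding connected_in_def
  proof (intro conjI ballI)
    show "C1 \<union> C2 \<noteq> {}" using z by auto
    fix u v assume "u \<in> C1 \<union> C2" "v \<in> C1 \<union> C2"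
    then have "(RR E (C1 \<union> C2))\<^sup>*\<^sup>* u z" "(RR E (C1 \<union> C2))\<^sup>*\<^sup>* z v"
      using to rtr_sym[OF to sym] by auto
    then show "(RR E (C1 \<union> C2))\<^sup>*\<^sup>* u v" by (rule rtranclp_trans)
  qed
qed

lemma conn_single: "connected_in E {x}"
  unfolding connected_in_def by auto

lemma conn_edge: "E u w \<Longrightarrow> E w u \<Longrightarrow> connected_in E {u, w}"
  unfolding connected_in_def by (auto intro: r_into_rtranclp)

lemma conn_add:
  assumes sym: "\<forall>u v. E u v \<longrightarrow> E v u" and c: "connected_in E C" and u: "u \<in> C" and e: "E u w"
  shows "connected_in E (insert w C)"
proof -
  have "connected_in E (C \<union> {u, w})"
    by (rule conn_union[OF sym c conn_edge]) (use e sym u in auto)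
  moreover have "C \<union> {u, w} = insert w C" using u by auto
  ultimately show ?thesis by simp
qed

lemma conn_sep:
  assumes c: "connected_in E C" and sub: "C \<subseteq> P \<union> R" and noe: "\<And>u w. u \<in> P \<Longrightarrow> w \<in> R \<Longrightarrow> \<not> E u w"
    and dis: "P \<inter> R = {}" and p: "p \<in> C" "p \<in> P" and r: "r \<in> C" "r \<in> R"
  shows False
proof -
  have "(RR E C)\<^sup>*\<^sup>* p r" using c p r unfolding connected_in_def by blast
  then have "r \<in> P"
    by (rule rtr_inv) (use p sub noe in blast)+
  then show False using r dis by auto
qed

section \<open>Components\<close>

lemma comp_exists:
  assumes g: "graph V E" and v: "v \<in> V - X"
  shows "\<exists>C. is_component V E X C \<and> v \<in> C"
proof -
  have sym: "\<forall>u v. E u v \<longrightarrow> E v u" using g unfolding graph_def by blast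
  define C where "C = {w. (RR E (V - X))\<^sup>*\<^sup>* v w}"
  have vC: "v \<in> C" unfolding C_def by simp
  have CV: "C \<subseteq> V - X" unfolding C_def using rtr_in[of E "V-X" v] v by blast
  have path: "(RR E C)\<^sup>*\<^sup>* v w" if "(RR E (V - X))\<^sup>*\<^sup>* v w" for w
    using that
  proof (induction rule: rtranclp_induct)
    case base then show ?case by simp
  next
    case (step y z)
    have "y \<in> C" using step(1) unfolding C_def by simp
    moreover have "z \<in> C" using step(1,2) unfolding C_def by (simp add: rtranclp.rtrancl_into_rtrancl)
    ultimately have "RR E C y z" using step(2) by simp
    then show ?case using step(3) by (simp add: rtranclp.rtrancl_into_rtrancl)
  qed
  have conn: "connected_in E C"
    unfolding connected_in_def
  proof (intro conjI ballI)
    show "C \<noteq> {}" using vC by auto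
    fix a b assume "a \<in> C" "b \<in> C"
    then have "(RR E (V - X))\<^sup>*\<^sup>* v a" "(RR E (V - X))\<^sup>*\<^sup>* v b" unfolding C_def by auto
    then have "(RR E C)\<^sup>*\<^sup>* v a" "(RR E C)\<^sup>*\<^sup>* v b" using path by blast+
    then have "(RR E C)\<^sup>*\<^sup>* a v" "(RR E C)\<^sup>*\<^sup>* v b" using rtr_sym[OF _ sym] by auto
    then show "(RR E C)\<^sup>*\<^sup>* a b" by (rule rtranclp_trans)
  qed
  have "is_component V E X C"
    unfolding is_component_def
  proof (intro conjI allI impI)
    show "C \<subseteq> V - X" by (rule CV)
    show "connected_in E C" by (rule conn)
    fix D assume D: "C \<subseteq> D \<and> D \<subseteq> V - X \<and> connected_in E D"
    have "D \<subseteq> C"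
    proof
      fix d assume "d \<in> D"
      moreover have "v \<in> D" using D vC by auto
      ultimately have "(RR E D)\<^sup>*\<^sup>* v d" using D unfolding connected_in_def by simp
      then have "(RR E (V - X))\<^sup>*\<^sup>* v d" by (rule rtr_mono) (use D in auto)
      then show "d \<in> C" unfolding C_def by simp
    qed
    then show "D = C" using D by auto
  qed
  then show ?thesis using vC by blast
qed

lemma comp_closed:
  assumes g: "graph V E" and C: "is_component V E X C" and u: "u \<in> C" and e: "E u w" and w: "w \<notin> X"
  shows "w \<in> C"
proof -
  have sym: "\<forall>u v. E u v \<longrightarrow> E v u" and wV: "w \<in> V" using g e unfolding graph_def by blast+
  have "connected_in E (insert w C)"
    by (rule conn_add[OF sym _ u e]) (use C in \<open>simp add: is_component_def\<close>)
  moreover have "C \<subseteq> insert w C" "insert w C \<subseteq> V - X" using C w wV unfolding is_component_def by auto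
  ultimately have "insert w C = C" using C unfolding is_component_def by simp
  then show ?thesis by auto
qed

lemma comp_eq:
  assumes g: "graph V E" and C1: "is_component V E X C1" and C2: "is_component V E X C2"
    and ne: "C1 \<inter> C2 \<noteq> {}"
  shows "C1 = C2"
proof -
  have sym: "\<forall>u v. E u v \<longrightarrow> E v u" using g unfolding graph_def by blast
  have "connected_in E (C1 \<union> C2)"
    by (rule conn_union[OF sym _ _ ne]) (use C1 C2 in \<open>auto simp: is_component_def\<close>)
  moreover have "C1 \<subseteq> C1 \<union> C2" "C2 \<subseteq> C1 \<union> C2" "C1 \<union> C2 \<subseteq> V - X"
    using C1 C2 unfolding is_component_def by auto
  ultimately have "C1 \<union> C2 = C1" "C1 \<union> C2 = C2" using C1 C2 unfolding is_component_def by simp_all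
  then show ?thesis by auto
qed

lemma nbhd_sub_X:
  assumes g: "graph V E" and C: "is_component V E X C"
  shows "nbhd V E C \<subseteq> X"
proof
  fix w assume "w \<in> nbhd V E C"
  then obtain u where "u \<in> C" "E u w" "w \<notin> C" unfolding nbhd_def by auto
  then show "w \<in> X" using comp_closed[OF g C] by blast
qed

lemma comp_nbhd_ge3:
  assumes g: "graph V E" and kc: "k_connected 3 V E" and C: "is_component V E X C"
    and x: "x \<in> X" "x \<notin> nbhd V E C" "x \<in> V"
  shows "3 \<le> card (nbhd V E C)"
proof (rule ccontr)
  assume "\<not> 3 \<le> card (nbhd V E C)"
  moreover have "nbhd V E C \<subseteq> V" unfolding nbhd_def by auto
  ultimately have "connected_in E (V - nbhd V E C)" using kc unfolding k_connected_def by simp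
  moreover obtain c where c: "c \<in> C" using C unfolding is_component_def connected_in_def by auto
  moreover have "c \<in> V - nbhd V E C" using c C unfolding is_component_def nbhd_def by auto
  moreover have "x \<in> V - nbhd V E C" using x by auto
  ultimately have p: "(RR E (V - nbhd V E C))\<^sup>*\<^sup>* c x" unfolding connected_in_def by blast
  have "x \<in> C"
  proof (rule rtr_inv[OF p c])
    fix u w assume "u \<in> C" "u \<in> V - nbhd V E C" "w \<in> V - nbhd V E C" "E u w"
    then show "w \<in> C" unfolding nbhd_def by auto
  qed
  then show False using C x unfolding is_component_def by auto
qed


section \<open>Tangles\<close>

lemma tan_cover:
  assumes "is_tangle V E k \<tau>" "(A1, B1) \<in> \<tau>" "(A2, B2) \<in> \<tau>" "(A3, B3) \<in> \<tau>"
    "A1 \<union> A2 \<union> A3 = V"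
    "\<And>u v. E u v \<Longrightarrow> (u \<in> A1 \<and> v \<in> A1) \<or> (u \<in> A2 \<and> v \<in> A2) \<or> (u \<in> A3 \<and> v \<in> A3)"
  shows False
proof -
  have "\<not> (\<exists>A1 B1 A2 B2 A3 B3. (A1, B1) \<in> \<tau> \<and> (A2, B2) \<in> \<tau> \<and> (A3, B3) \<in> \<tau> \<and>
          A1 \<union> A2 \<union> A3 = V \<and>
          (\<forall>u v. E u v \<longrightarrow> (u \<in> A1 \<and> v \<in> A1) \<or> (u \<in> A2 \<and> v \<in> A2) \<or> (u \<in> A3 \<and> v \<in> A3)))"
    using assms(1) unfolding is_tangle_def by simp
  moreover have "(A1, B1) \<in> \<tau> \<and> (A2, B2) \<in> \<tau> \<and> (A3, B3) \<in> \<tau> \<and>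
          A1 \<union> A2 \<union> A3 = V \<and>
          (\<forall>u v. E u v \<longrightarrow> (u \<in> A1 \<and> v \<in> A1) \<or> (u \<in> A2 \<and> v \<in> A2) \<or> (u \<in> A3 \<and> v \<in> A3))"
    using assms(2-6) by blast
  ultimately show False by blast
qed

lemma tan_orient:
  assumes "is_tangle V E k \<tau>" "is_sep V E A B" "card (A \<inter> B) < k"
  shows "(A, B) \<in> \<tau> \<or> (B, A) \<in> \<tau>"
  using assms unfolding is_tangle_def by blast

lemma tan_mem:
  assumes "is_tangle V E k \<tau>" "(A, B) \<in> \<tau>"
  shows "is_sep V E A B" "card (A \<inter> B) < k"
  using assms unfolding is_tangle_def sep_order_def by auto

lemma tan_notV:
  assumes g: "graph V E" and t: "is_tangle V E k \<tau>" and ab: "(A, B) \<in> \<tau>" and VA: "V \<subseteq> A"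
  shows False
proof -
  have "A \<subseteq> V" using tan_mem(1)[OF t ab] unfolding is_sep_def by auto
  then have AV: "A = V" using VA by auto
  show False
    by (rule tan_cover[OF t ab ab ab]) (use AV g in \<open>auto simp: graph_def\<close>)
qed

lemma tan_down:
  assumes g: "graph V E" and t: "is_tangle V E k \<tau>" and ab: "(A, B) \<in> \<tau>"
    and cd: "is_sep V E C D" "card (C \<inter> D) < k" and CA: "C \<subseteq> A" and BD: "B \<subseteq> D"
  shows "(C, D) \<in> \<tau>"
proof (rule ccontr)
  assume "(C, D) \<notin> \<tau>"
  then have dc: "(D, C) \<in> \<tau>" using tan_orient[OF t cd] by blast
  have sym: "\<And>u v. E u v \<Longrightarrow> E v u" and inV: "\<And>u v. E u v \<Longrightarrow> u \<in> V \<and> v \<in> V"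
    using g unfolding graph_def by blast+
  have AV: "A \<subseteq> V" using tan_mem(1)[OF t ab] unfolding is_sep_def by auto
  have CDV: "C \<union> D = V" and noe: "\<And>u v. u \<in> C - D \<Longrightarrow> v \<in> D - C \<Longrightarrow> \<not> E u v"
    using cd(1) unfolding is_sep_def by blast+
  show False
  proof (rule tan_cover[OF t ab dc dc])
    show "A \<union> D \<union> D = V" using AV CDV CA by auto
    fix u v assume e: "E u v"
    have uv: "u \<in> V" "v \<in> V" using inV[OF e] by auto
    show "(u \<in> A \<and> v \<in> A) \<or> (u \<in> D \<and> v \<in> D) \<or> (u \<in> D \<and> v \<in> D)"
    proof (cases "u \<in> D \<and> v \<in> D")
      case True then show ?thesis by blast
    next
      case False
      then have "u \<notin> D \<or> v \<notin> D" by blast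
      then show ?thesis
      proof
        assume u: "u \<notin> D"
        then have "u \<in> C" using uv CDV by auto
        moreover have "v \<in> C" using noe[of u v] e u \<open>u \<in> C\<close> uv CDV by auto
        ultimately show ?thesis using CA by auto
      next
        assume v: "v \<notin> D"
        then have "v \<in> C" using uv CDV by auto
        moreover have "u \<in> C" using noe[of v u] sym[OF e] v \<open>v \<in> C\<close> uv CDV by auto
        ultimately show ?thesis using CA by auto
      qed
    qed
  qed
qed

lemma tan_join:
  assumes g: "graph V E" and t: "is_tangle V E k \<tau>" and ab: "(A, B) \<in> \<tau>" and cd: "(C, D) \<in> \<tau>"
    and ord: "card ((A \<union> C) \<inter> (B \<inter> D)) < k"
  shows "(A \<union> C, B \<inter> D) \<in> \<tau>"
proof (rule ccontr)
  have sym: "\<And>u v. E u v \<Longrightarrow> E v u" and inV: "\<And>u v. E u v \<Longrightarrow> u \<in> V \<and> v \<in> V"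
    using g unfolding graph_def by blast+
  have ABV: "A \<union> B = V" and noe1: "\<And>u v. u \<in> A - B \<Longrightarrow> v \<in> B - A \<Longrightarrow> \<not> E u v"
    using tan_mem(1)[OF t ab] unfolding is_sep_def by blast+
  have CDV: "C \<union> D = V" and noe2: "\<And>u v. u \<in> C - D \<Longrightarrow> v \<in> D - C \<Longrightarrow> \<not> E u v"
    using tan_mem(1)[OF t cd] unfolding is_sep_def by blast+
  have sep: "is_sep V E (A \<union> C) (B \<inter> D)"
    unfolding is_sep_def
  proof (intro conjI allI impI)
    show "A \<union> C \<union> B \<inter> D = V" using ABV CDV by auto
    fix u v assume "u \<in> A \<union> C - B \<inter> D \<and> v \<in> B \<inter> D - (A \<union> C)"
    then show "\<not> E u v" using noe1[of u v] noe2[of u v] ABV CDV by auto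
  qed
  assume "(A \<union> C, B \<inter> D) \<notin> \<tau>"
  then have dc: "(B \<inter> D, A \<union> C) \<in> \<tau>" using tan_orient[OF t sep ord] by blast
  show False
  proof (rule tan_cover[OF t ab cd dc])
    show "A \<union> C \<union> B \<inter> D = V" using ABV CDV by auto
    fix u v assume e: "E u v"
    have uv: "u \<in> V" "v \<in> V" using inV[OF e] by auto
    have "u \<in> B" if "\<not> (u \<in> A \<and> v \<in> A)"
      using that noe1[of u v] e uv ABV by auto
    moreover have "v \<in> B" if "\<not> (u \<in> A \<and> v \<in> A)"
      using that noe1[of v u] sym[OF e] uv ABV by auto
    moreover have "u \<in> D" if "\<not> (u \<in> C \<and> v \<in> C)"
      using that noe2[of u v] e uv CDV by auto
    moreover have "v \<in> D" if "\<not> (u \<in> C \<and> v \<in> C)"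
      using that noe2[of v u] sym[OF e] uv CDV by auto
    ultimately show "(u \<in> A \<and> v \<in> A) \<or> (u \<in> C \<and> v \<in> C) \<or> (u \<in> B \<inter> D \<and> v \<in> B \<inter> D)"
      by blast
  qed
qed

lemma tan_small:
  assumes g: "graph V E" and t: "is_tangle V E k \<tau>" and S: "S \<subseteq> V" "card S < k"
  shows "(S, V) \<in> \<tau>"
proof -
  have sep: "is_sep V E S V" using S unfolding is_sep_def by auto
  have "card (S \<inter> V) < k" using S by (simp add: Int_absorb2)
  then have "(S, V) \<in> \<tau> \<or> (V, S) \<in> \<tau>" using tan_orient[OF t sep] by blast
  then show ?thesis using tan_notV[OF g t, of V S] by blast
qed


section \<open>From a tangle to cubicity\<close>

context
  fixes V :: "'a set" and E :: "'a \<Rightarrow> 'a \<Rightarrow> bool" and \<sigma> :: "('a set \<times> 'a set) set"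
  assumes g: "graph V E" and kc: "k_connected 3 V E"
    and sig: "\<forall>s\<in>\<sigma>. is_sep V E (fst s) (snd s) \<and> sep_order s = 3"
    and star: "is_star \<sigma>" and cX: "card (bag V \<sigma>) = 4"
begin

lemma sig_sep: "(A, B) \<in> \<sigma> \<Longrightarrow> is_sep V E A B"
  using sig by fastforce

lemma sig_card: "(A, B) \<in> \<sigma> \<Longrightarrow> card (A \<inter> B) = 3"
  using sig unfolding sep_order_def by fastforce

lemma finV: "finite V" using g unfolding graph_def by blast

lemma X_sub: "bag V \<sigma> \<subseteq> V" unfolding bag_def by auto

lemma X_B: "(A, B) \<in> \<sigma> \<Longrightarrow> bag V \<sigma> \<subseteq> B" unfolding bag_def by force

lemma finX: "finite (bag V \<sigma>)" using finV X_sub finite_subset by blast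

lemma outside: "v \<in> V \<Longrightarrow> v \<notin> bag V \<sigma> \<Longrightarrow> \<exists>A B. (A, B) \<in> \<sigma> \<and> v \<in> A \<and> v \<notin> B"
proof -
  assume v: "v \<in> V" "v \<notin> bag V \<sigma>"
  then obtain s where s: "s \<in> \<sigma>" "v \<notin> snd s" unfolding bag_def by auto
  obtain A B where "s = (A, B)" by (cases s)
  then have "(A, B) \<in> \<sigma>" "v \<notin> B" "A \<union> B = V" using s sig_sep unfolding is_sep_def by auto
  then show ?thesis using v by blast
qed

lemma star_le: "(A, B) \<in> \<sigma> \<Longrightarrow> (A', B') \<in> \<sigma> \<Longrightarrow> (A, B) \<noteq> (A', B') \<Longrightarrow> A \<subseteq> B' \<and> A' \<subseteq> B"
  using star unfolding is_star_def osep_le_def by auto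

lemma comp_in_side:
  assumes C: "is_component V E (bag V \<sigma>) C" and ab: "(A, B) \<in> \<sigma>" and c: "c \<in> C" "c \<in> A" "c \<notin> B"
  shows "C \<subseteq> A - B"
proof
  fix w assume w: "w \<in> C"
  have sep: "A \<union> B = V" "\<And>u v. u \<in> A - B \<Longrightarrow> v \<in> B - A \<Longrightarrow> \<not> E u v"
    using sig_sep[OF ab] unfolding is_sep_def by blast+
  have CV: "C \<subseteq> V - bag V \<sigma>" using C unfolding is_component_def by simp
  have "(RR E C)\<^sup>*\<^sup>* c w" using C c w unfolding is_component_def connected_in_def by blast
  then show "w \<in> A - B"
  proof (rule rtr_inv)
    show "c \<in> A - B" using c by simp
    fix u x assume u: "u \<in> A - B" "u \<in> C" and x: "x \<in> C" "E u x"
    have xV: "x \<in> V" "x \<notin> bag V \<sigma>" using x CV by auto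
    have xA: "x \<in> A" using sep(1) sep(2)[OF u(1)] x xV by auto
    show "x \<in> A - B"
    proof (rule ccontr)
      assume "x \<notin> A - B"
      then have xB: "x \<in> B" using xA by simp
      obtain A' B' where ab': "(A', B') \<in> \<sigma>" "x \<in> A'" "x \<notin> B'" using outside xV by blast
      show False
      proof (cases "(A, B) = (A', B')")
        case True then show False using xB ab' by simp
      next
        case False then show False using star_le[OF ab ab'(1)] xA ab' by auto
      qed
    qed
  qed
qed

lemma comp_side0:
  assumes C: "is_component V E (bag V \<sigma>) C"
  shows "\<exists>A B. (A, B) \<in> \<sigma> \<and> C \<subseteq> A - B \<and> nbhd V E C \<subseteq> A \<inter> B"
proof -
  obtain c where c: "c \<in> C" using C unfolding is_component_def connected_in_def by auto
  have cV: "c \<in> V" "c \<notin> bag V \<sigma>" using C c unfolding is_component_def by auto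
  obtain A B where ab: "(A, B) \<in> \<sigma>" "c \<in> A" "c \<notin> B" using outside[OF cV] by blast
  have CAB: "C \<subseteq> A - B" using comp_in_side[OF C ab(1) c ab(2,3)] .
  have sep: "A \<union> B = V" "\<And>u v. u \<in> A - B \<Longrightarrow> v \<in> B - A \<Longrightarrow> \<not> E u v"
    using sig_sep[OF ab(1)] unfolding is_sep_def by blast+
  have "nbhd V E C \<subseteq> A \<inter> B"
  proof
    fix w assume w: "w \<in> nbhd V E C"
    then obtain u where u: "u \<in> C" "E u w" "w \<in> V" unfolding nbhd_def by auto
    have "w \<in> A" using sep(1) sep(2)[of u w] u CAB by auto
    moreover have "w \<in> B" using nbhd_sub_X[OF g C] w X_B[OF ab(1)] by auto
    ultimately show "w \<in> A \<inter> B" by simp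
  qed
  then show ?thesis using ab CAB by blast
qed

lemma comp_nbhd:
  assumes C: "is_component V E (bag V \<sigma>) C"
  shows "nbhd V E C \<subseteq> bag V \<sigma>" "card (nbhd V E C) = 3"
proof -
  show sub: "nbhd V E C \<subseteq> bag V \<sigma>" by (rule nbhd_sub_X[OF g C])
  obtain A B where ab: "(A, B) \<in> \<sigma>" "C \<subseteq> A - B" "nbhd V E C \<subseteq> A \<inter> B"
    using comp_side0[OF C] by blast
  have "finite (A \<inter> B)" using sig_sep[OF ab(1)] finV unfolding is_sep_def
    by (metis finite_Int finite_Un)
  then have le: "card (nbhd V E C) \<le> 3" using card_mono[OF _ ab(3)] sig_card[OF ab(1)] by simp
  have "\<not> bag V \<sigma> \<subseteq> nbhd V E C"
  proof
    assume "bag V \<sigma> \<subseteq> nbhd V E C"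
    then have "card (bag V \<sigma>) \<le> card (nbhd V E C)"
      using card_mono finite_subset[OF sub finX] by blast
    then show False using le cX by simp
  qed
  then obtain x where "x \<in> bag V \<sigma>" "x \<notin> nbhd V E C" by blast
  then have "3 \<le> card (nbhd V E C)" using comp_nbhd_ge3[OF g kc C] X_sub by blast
  then show "card (nbhd V E C) = 3" using le by simp
qed

lemma comp_side:
  assumes C: "is_component V E (bag V \<sigma>) C"
  shows "\<exists>A B. (A, B) \<in> \<sigma> \<and> C \<subseteq> A - B \<and> A \<inter> B = nbhd V E C"
proof -
  obtain A B where ab: "(A, B) \<in> \<sigma>" "C \<subseteq> A - B" "nbhd V E C \<subseteq> A \<inter> B"
    using comp_side0[OF C] by blast
  have "finite (A \<inter> B)" using sig_sep[OF ab(1)] finV unfolding is_sep_def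
    by (metis finite_Int finite_Un)
  then have "A \<inter> B = nbhd V E C"
    using card_subset_eq[OF _ ab(3)] sig_card[OF ab(1)] comp_nbhd(2)[OF C] by simp
  then show ?thesis using ab by blast
qed


lemma side_in_tau:
  assumes t: "is_tangle V E 4 \<tau>" and sub: "\<sigma> \<subseteq> \<tau>" and T: "T \<subseteq> bag V \<sigma>" "card T = 3"
  shows "(T \<union> \<Union>{C. is_component V E (bag V \<sigma>) C \<and> nbhd V E C = T},
          V - \<Union>{C. is_component V E (bag V \<sigma>) C \<and> nbhd V E C = T}) \<in> \<tau>"
proof -
  let ?K = "{C. is_component V E (bag V \<sigma>) C \<and> nbhd V E C = T}"
  have Kin: "C \<subseteq> V - bag V \<sigma>" if "C \<in> ?K" for C using that unfolding is_component_def by auto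
  have "?K \<subseteq> Pow V" using Kin by auto
  then have finK: "finite ?K" using finV by (meson finite_Pow_iff finite_subset)
  have TV: "T \<subseteq> V" using T X_sub by auto
  have main: "\<K> \<subseteq> ?K \<Longrightarrow> (T \<union> \<Union>\<K>, V - \<Union>\<K>) \<in> \<tau>" if "finite \<K>" for \<K>
    using that
  proof (induction rule: finite_induct)
    case empty
    have "(T, V) \<in> \<tau>" by (rule tan_small[OF g t TV]) (use T in simp)
    then show ?case by simp
  next
    case (insert C \<K>)
    have CK: "C \<in> ?K" and KK: "\<K> \<subseteq> ?K" using insert by auto
    then have IH: "(T \<union> \<Union>\<K>, V - \<Union>\<K>) \<in> \<tau>" using insert by blast
    have Ccomp: "is_component V E (bag V \<sigma>) C" and nC: "nbhd V E C = T" using CK by auto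
    obtain A B where ab: "(A, B) \<in> \<sigma>" "C \<subseteq> A - B" "A \<inter> B = T"
      using comp_side[OF Ccomp] nC by blast
    have CV: "C \<subseteq> V - bag V \<sigma>" using Kin[OF CK] .
    have sepC: "is_sep V E (T \<union> C) (V - C)"
      unfolding is_sep_def
    proof (intro conjI allI impI)
      show "T \<union> C \<union> (V - C) = V" using TV CV by auto
      fix u v assume uv: "u \<in> T \<union> C - (V - C) \<and> v \<in> V - C - (T \<union> C)"
      show "\<not> E u v"
      proof
        assume e: "E u v"
        have "u \<in> C" using uv TV by auto
        then have "v \<in> nbhd V E C" using uv e unfolding nbhd_def by auto
        then show False using uv nC by auto
      qed
    qed
    have eqT: "(T \<union> C) \<inter> (V - C) = T" using TV CV T by auto
    have ordC: "card ((T \<union> C) \<inter> (V - C)) < 4" using eqT T by simp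
    have BV: "B \<subseteq> V" using sig_sep[OF ab(1)] unfolding is_sep_def by auto
    have "(T \<union> C, V - C) \<in> \<tau>"
      by (rule tan_down[OF g t _ sepC ordC, of A B]) (use ab sub BV in auto)
    then have J: "(T \<union> \<Union>\<K> \<union> (T \<union> C), (V - \<Union>\<K>) \<inter> (V - C)) \<in> \<tau>"
    proof (rule tan_join[OF g t IH])
      have "\<Union>\<K> \<subseteq> V - bag V \<sigma>" using KK Kin by blast
      then have "(T \<union> \<Union>\<K> \<union> (T \<union> C)) \<inter> ((V - \<Union>\<K>) \<inter> (V - C)) = T"
        using TV CV T by auto
      then show "card ((T \<union> \<Union>\<K> \<union> (T \<union> C)) \<inter> ((V - \<Union>\<K>) \<inter> (V - C))) < 4"
        using T by simp
    qed
    have "T \<union> \<Union>\<K> \<union> (T \<union> C) = T \<union> \<Union>(insert C \<K>)" by auto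
    moreover have "(V - \<Union>\<K>) \<inter> (V - C) = V - \<Union>(insert C \<K>)" by auto
    ultimately show ?case using J by simp
  qed
  show ?thesis by (rule main[OF finK]) simp
qed

lemma cubic_sup:
  assumes t: "is_tangle V E 4 \<tau>" and sub: "\<sigma> \<subseteq> \<tau>" and S: "S \<subseteq> bag V \<sigma>" "card S = 3"
  shows "\<exists>C. is_component V E (bag V \<sigma>) C \<and> nbhd V E C = S"
proof (rule ccontr)
  assume no: "\<not> (\<exists>C. is_component V E (bag V \<sigma>) C \<and> nbhd V E C = S)"
  let ?X = "bag V \<sigma>"
  have sym: "\<And>u v. E u v \<Longrightarrow> E v u" and inV: "\<And>u v. E u v \<Longrightarrow> u \<in> V \<and> v \<in> V"
    using g unfolding graph_def by blast+
  have "card (?X - S) = 1" using S cX finX by (simp add: card_Diff_subset finite_subset)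
  then obtain y where y: "?X - S = {y}" using card_1_singleton_iff by (metis One_nat_def)
  have Sy: "?X - {y} = S" using y S by auto
  obtain s1 s2 s3 where s: "S = {s1, s2, s3}" "s1 \<noteq> s2" "s2 \<noteq> s3" "s1 \<noteq> s3"
    using S(2) card_3_iff by metis
  define D where "D z = \<Union>{C. is_component V E ?X C \<and> nbhd V E C = ?X - {z}}" for z
  have side: "(?X - {z} \<union> D z, V - D z) \<in> \<tau>" if "z \<in> S" for z
  proof -
    have "card (?X - {z}) = 3" using that S cX finX by (auto simp: card_Diff_singleton)
    then show ?thesis unfolding D_def using side_in_tau[OF t sub, of "?X - {z}"] by auto
  qed
  have key: "\<exists>z C. z \<in> S \<and> is_component V E ?X C \<and> u \<in> C \<and> nbhd V E C = ?X - {z}"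
    if u: "u \<in> V" "u \<notin> ?X" for u
  proof -
    obtain C where C: "is_component V E ?X C" "u \<in> C" using comp_exists[OF g] u by blast
    have nX: "nbhd V E C \<subseteq> ?X" "card (nbhd V E C) = 3" using comp_nbhd[OF C(1)] by auto
    have "card (?X - nbhd V E C) = 1" using nX cX finX by (simp add: card_Diff_subset finite_subset)
    then obtain z where z: "?X - nbhd V E C = {z}" using card_1_singleton_iff by (metis One_nat_def)
    have nz: "nbhd V E C = ?X - {z}" using z nX by auto
    have "z \<noteq> y" using nz Sy no C by auto
    moreover have "z \<in> ?X" using z by auto
    ultimately have "z \<in> S" using y by auto
    then show ?thesis using C nz by blast
  qed
  have sideV: "?X - {z} \<union> D z \<subseteq> V" for z
    using X_sub unfolding D_def is_component_def by auto
  show False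
  proof (rule tan_cover[OF t side side side])
    show "s1 \<in> S" "s2 \<in> S" "s3 \<in> S" using s by auto
    show "?X - {s1} \<union> D s1 \<union> (?X - {s2} \<union> D s2) \<union> (?X - {s3} \<union> D s3) = V"
    proof
      show "?X - {s1} \<union> D s1 \<union> (?X - {s2} \<union> D s2) \<union> (?X - {s3} \<union> D s3) \<subseteq> V"
        using sideV by blast
      show "V \<subseteq> ?X - {s1} \<union> D s1 \<union> (?X - {s2} \<union> D s2) \<union> (?X - {s3} \<union> D s3)"
      proof
        fix v assume v: "v \<in> V"
        show "v \<in> ?X - {s1} \<union> D s1 \<union> (?X - {s2} \<union> D s2) \<union> (?X - {s3} \<union> D s3)"
        proof (cases "v \<in> ?X")
          case True then show ?thesis using s by auto
        next
          case False
          then obtain z C where "z \<in> S" "is_component V E ?X C" "v \<in> C" "nbhd V E C = ?X - {z}"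
            using key v by blast
          then have "v \<in> D z" unfolding D_def by blast
          then show ?thesis using \<open>z \<in> S\<close> s by auto
        qed
      qed
    qed
    fix u w assume e: "E u w"
    have uw: "u \<in> V" "w \<in> V" using inV[OF e] by auto
    have one: "u \<in> ?X - {z} \<union> D z \<and> w \<in> ?X - {z} \<union> D z"
      if "z \<in> S" "is_component V E ?X C" "u \<in> C" "nbhd V E C = ?X - {z}" "E u w" "w \<in> V"
      for z C u w
    proof -
      have uD: "u \<in> D z" using that unfolding D_def by blast
      have "w \<in> C \<or> w \<in> nbhd V E C" using that unfolding nbhd_def by auto
      then have "w \<in> D z \<or> w \<in> ?X - {z}" using that unfolding D_def by blast
      then show ?thesis using uD by blast
    qed
    show "(u \<in> ?X - {s1} \<union> D s1 \<and> w \<in> ?X - {s1} \<union> D s1) \<or>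
          (u \<in> ?X - {s2} \<union> D s2 \<and> w \<in> ?X - {s2} \<union> D s2) \<or>
          (u \<in> ?X - {s3} \<union> D s3 \<and> w \<in> ?X - {s3} \<union> D s3)"
    proof (cases "u \<in> ?X \<and> w \<in> ?X")
      case True then show ?thesis using s by auto
    next
      case False
      then have "u \<notin> ?X \<or> w \<notin> ?X" by blast
      then have "\<exists>z\<in>S. u \<in> ?X - {z} \<union> D z \<and> w \<in> ?X - {z} \<union> D z"
      proof
        assume "u \<notin> ?X"
        then obtain z C where "z \<in> S" "is_component V E ?X C" "u \<in> C" "nbhd V E C = ?X - {z}"
          using key uw by blast
        then show ?thesis using one[of z C u w] e uw by blast
      next
        assume "w \<notin> ?X"
        then obtain z C where "z \<in> S" "is_component V E ?X C" "w \<in> C" "nbhd V E C = ?X - {z}"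
          using key uw by blast
        then show ?thesis using one[of z C w u] sym[OF e] uw by blast
      qed
      then show ?thesis using s by auto
    qed
  qed
qed

lemma tangle_cubic:
  assumes t: "is_tangle V E 4 \<tau>" and sub: "\<sigma> \<subseteq> \<tau>"
  shows "cubic V E (bag V \<sigma>)"
  unfolding cubic_def
proof (intro conjI)
  show "bag V \<sigma> \<subseteq> V" by (rule X_sub)
  show "card (bag V \<sigma>) = 4" by (rule cX)
  show "{nbhd V E C |C. is_component V E (bag V \<sigma>) C} = {S. S \<subseteq> bag V \<sigma> \<and> card S = 3}"
  proof
    show "{nbhd V E C |C. is_component V E (bag V \<sigma>) C} \<subseteq> {S. S \<subseteq> bag V \<sigma> \<and> card S = 3}"
      using comp_nbhd by blast
    show "{S. S \<subseteq> bag V \<sigma> \<and> card S = 3} \<subseteq> {nbhd V E C |C. is_component V E (bag V \<sigma>) C}"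
      using cubic_sup[OF t sub] by blast
  qed
qed

end


section \<open>The cube\<close>
definition cl :: "cube_vertex list" where
 "cl = [(False,False,False),(False,False,True),(False,True,False),(False,True,True),
        (True,False,False),(True,False,True),(True,True,False),(True,True,True)]"
lemma set_cl: "set cl = UNIV"
  by (auto simp: cl_def)
definition chk :: "cube_vertex list \<Rightarrow> bool" where
 "chk ps = (2 \<le> card (set ps) \<longrightarrow> 2 \<le> card (set (filter (\<lambda>w. w \<notin> set ps \<and> \<not>(\<exists>u\<in>set ps. cube_E u w)) cl))
    \<longrightarrow> 4 \<le> card (set (filter (\<lambda>w. w \<notin> set ps \<and> (\<exists>u\<in>set ps. cube_E u w)) cl)))"
lemma cubeS: "\<forall>ps \<in> set (subseqs cl). chk ps"
  by code_simp
lemma nb_out: "\<forall>b c b' c' x. (b,c) \<noteq> (b',c') \<longrightarrow> x \<in> {(False,b,c),(True,b,c),(False,b',c'),(True,b',c')} \<longrightarrow>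
   (\<exists>w. cube_E x w \<and> w \<notin> {(False,b,c),(True,b,c),(False,b',c'),(True,b',c')})"
  by (simp add: cube_E_def all_bool_eq ex_bool_eq split_paired_Ex split_paired_All)
lemma php: fixes Q1 Q2 Q3 :: "bool \<Rightarrow> bool \<Rightarrow> bool" assumes "\<forall>b c. Q1 b c \<or> Q2 b c \<or> Q3 b c"
  "\<forall>b c b' c'. (b,c) \<noteq> (b',c') \<longrightarrow> \<not> (Q1 b c \<and> Q1 b' c')"
  "\<forall>b c b' c'. (b,c) \<noteq> (b',c') \<longrightarrow> \<not> (Q2 b c \<and> Q2 b' c')"
  "\<forall>b c b' c'. (b,c) \<noteq> (b',c') \<longrightarrow> \<not> (Q3 b c \<and> Q3 b' c')"
  shows False
  using assms unfolding all_bool_eq by (simp only: prod.inject simp_thms) sat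

lemma cube_graph: "graph cube_V cube_E"
  unfolding graph_def cube_V_def by (auto simp: cube_E_def split: prod.splits)

lemma cube_card: "card cube_V = 8"
proof -
  have "distinct cl" by (simp add: cl_def)
  then have "card (set cl) = 8" using distinct_card by (fastforce simp: cl_def)
  then show ?thesis using set_cl unfolding cube_V_def by simp
qed

lemma cube_nbrs: "\<exists>x1 x2 x3. \<forall>w. cube_E v w \<longrightarrow> w = x1 \<or> w = x2 \<or> w = x3"
proof -
  obtain a b c where v: "v = (a, b, c)" by (cases v) auto
  show ?thesis
    by (rule exI[of _ "(\<not>a, b, c)"], rule exI[of _ "(a, \<not>b, c)"], rule exI[of _ "(a, b, \<not>c)"])
       (auto simp: v cube_E_def)
qed

lemma cube_SL:
  assumes sep: "is_sep cube_V cube_E A B" and ord: "card (A \<inter> B) < 4"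
  shows "card (A - B) \<le> 1 \<or> card (B - A) \<le> 1"
proof (rule ccontr)
  assume "\<not> ?thesis"
  then have c1: "2 \<le> card (A - B)" and c2: "2 \<le> card (B - A)" by auto
  have noe: "\<And>u v. u \<in> A - B \<Longrightarrow> v \<in> B - A \<Longrightarrow> \<not> cube_E u v"
    using sep unfolding is_sep_def by blast
  have AB: "A \<union> B = UNIV" using sep unfolding is_sep_def cube_V_def by blast
  have "A - B \<in> set (map set (subseqs cl))" using set_cl by (simp add: subseqs_powset)
  then obtain ps where ps: "ps \<in> set (subseqs cl)" "set ps = A - B" by auto
  have ch: "chk ps" using cubeS ps(1) by blast
  let ?R = "{w. w \<notin> A - B \<and> \<not> (\<exists>u\<in>A - B. cube_E u w)}"
  let ?N = "{w. w \<notin> A - B \<and> (\<exists>u\<in>A - B. cube_E u w)}"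
  have fR: "set (filter (\<lambda>w. w \<notin> set ps \<and> \<not>(\<exists>u\<in>set ps. cube_E u w)) cl) = ?R"
    using set_cl ps(2) by auto
  have fN: "set (filter (\<lambda>w. w \<notin> set ps \<and> (\<exists>u\<in>set ps. cube_E u w)) cl) = ?N"
    using set_cl ps(2) by auto
  have "B - A \<subseteq> ?R" using noe by auto
  then have "2 \<le> card ?R" using c2 card_mono[of ?R "B - A"] by simp
  then have "4 \<le> card ?N" using ch c1 ps(2) fR fN unfolding chk_def by simp
  moreover have "?N \<subseteq> A \<inter> B"
  proof
    fix w assume "w \<in> ?N"
    then obtain u where "u \<in> A - B" "cube_E u w" "w \<notin> A - B" by auto
    then show "w \<in> A \<inter> B" using noe[of u w] AB by auto
  qed
  then have "card ?N \<le> card (A \<inter> B)" by (rule card_mono[rotated]) simp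
  ultimately show False using ord by simp
qed

definition tauQ :: "(cube_vertex set \<times> cube_vertex set) set" where
  "tauQ = {s. is_sep cube_V cube_E (fst s) (snd s) \<and> sep_order s < 4 \<and> card (fst s - snd s) \<le> 1}"

lemma cube_L:
  assumes t: "is_tangle cube_V cube_E 4 \<tau>" and cd: "(C, D) \<in> \<tau>"
  shows "2 \<le> card (D - C)"
proof (rule ccontr)
  assume "\<not> 2 \<le> card (D - C)"
  then have c01: "card (D - C) = 0 \<or> card (D - C) = 1" by linarith
  have CD: "C \<union> D = cube_V" using tan_mem(1)[OF t cd] unfolding is_sep_def by blast
  consider "D - C = {}" | v where "D - C = {v}"
  proof -
    have "finite (D - C)" by simp
    then show ?thesis using that c01
      by (metis card_0_eq card_1_singleton_iff One_nat_def)
  qed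
  then show False
  proof cases
    case 1
    then show False using tan_notV[OF cube_graph t cd] CD by auto
  next
    case (2 v)
    obtain x1 x2 x3 where nb: "\<forall>w. cube_E v w \<longrightarrow> w = x1 \<or> w = x2 \<or> w = x3"
      using cube_nbrs by blast
    have s1: "({v, x1, x2}, cube_V) \<in> \<tau>"
      by (rule tan_small[OF cube_graph t]) (auto simp: cube_V_def card_insert_if)
    have s2: "({v, x3}, cube_V) \<in> \<tau>"
      by (rule tan_small[OF cube_graph t]) (auto simp: cube_V_def card_insert_if)
    have sym: "\<And>u w. cube_E u w \<Longrightarrow> cube_E w u" using cube_graph unfolding graph_def by blast
    show False
    proof (rule tan_cover[OF t cd s1 s2])
      show "C \<union> {v, x1, x2} \<union> {v, x3} = cube_V" using CD 2 unfolding cube_V_def by auto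
      fix u w assume e: "cube_E u w"
      have "u \<noteq> v \<Longrightarrow> u \<in> C" "w \<noteq> v \<Longrightarrow> w \<in> C" using CD 2 unfolding cube_V_def by auto
      moreover have "u = v \<Longrightarrow> w = x1 \<or> w = x2 \<or> w = x3" using nb e by blast
      moreover have "w = v \<Longrightarrow> u = x1 \<or> u = x2 \<or> u = x3" using nb sym[OF e] by blast
      ultimately show "(u \<in> C \<and> w \<in> C) \<or> (u \<in> {v, x1, x2} \<and> w \<in> {v, x1, x2}) \<or> (u \<in> {v, x3} \<and> w \<in> {v, x3})"
        by auto
    qed
  qed
qed

lemma tauQ_side:
  assumes ab: "(A, B) \<in> tauQ" and ne: "(b, c) \<noteq> (b', c')"
  shows "\<not> ((False, b, c) \<in> A \<and> (True, b, c) \<in> A \<and> (False, b', c') \<in> A \<and> (True, b', c') \<in> A)"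
proof
  let ?W = "{(False, b, c), (True, b, c), (False, b', c'), (True, b', c')}"
  assume "(False, b, c) \<in> A \<and> (True, b, c) \<in> A \<and> (False, b', c') \<in> A \<and> (True, b', c') \<in> A"
  then have WA: "?W \<subseteq> A" by auto
  have cW: "card ?W = 4" using ne by auto
  have sep: "is_sep cube_V cube_E A B" and o: "card (A \<inter> B) < 4" and d: "card (A - B) \<le> 1"
    using ab unfolding tauQ_def sep_order_def by auto
  have fin: "finite A" "finite B" by simp_all
  have "card A \<le> card (A \<inter> B) + card (A - B)"
    by (metis Int_Diff_Un card_Un_le)
  then have cA: "card A \<le> 4" using o d by simp
  have AW: "A = ?W"
    using card_seteq[OF fin(1) WA] cW cA by simp
  have "A - B \<noteq> {}"
  proof
    assume "A - B = {}"
    then have "A \<inter> B = A" by auto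
    then show False using o cA cW AW by simp
  qed
  then obtain v where v: "v \<in> A" "v \<notin> B" by auto
  have noe: "\<And>u w. u \<in> A - B \<Longrightarrow> w \<in> B - A \<Longrightarrow> \<not> cube_E u w" and AB: "A \<union> B = UNIV"
    using sep unfolding is_sep_def cube_V_def by blast+
  have vW: "v \<in> ?W" using v(1) AW by simp
  obtain w where w: "cube_E v w" "w \<notin> ?W" using nb_out[rule_format, OF ne vW] by blast
  have "w \<in> A" using noe[of v w] v w(1) AB by auto
  then show False using w AW by simp
qed

lemma tauQ_tangle: "is_tangle cube_V cube_E 4 tauQ"
  unfolding is_tangle_def
proof (intro conjI allI impI)
  show "\<forall>s\<in>tauQ. is_sep cube_V cube_E (fst s) (snd s) \<and> sep_order s < 4"
    unfolding tauQ_def by auto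
  fix A B assume AB: "is_sep cube_V cube_E A B \<and> card (A \<inter> B) < 4"
  have sepAB: "is_sep cube_V cube_E A B" and oAB: "card (A \<inter> B) < 4" using AB by auto
  have symQ: "\<And>u w. cube_E u w \<Longrightarrow> cube_E w u" using cube_graph unfolding graph_def by blast
  have sepBA: "is_sep cube_V cube_E B A" unfolding is_sep_def
  proof (intro conjI allI impI)
    show "B \<union> A = cube_V" using sepAB unfolding is_sep_def by auto
    fix u v assume uv: "u \<in> B - A \<and> v \<in> A - B"
    have vu: "v \<in> A - B" "u \<in> B - A" using uv by auto
    have "\<not> cube_E v u" using sepAB vu unfolding is_sep_def by (meson)
    then show "\<not> cube_E u v" using symQ by blast
  qed
  have o: "card (B \<inter> A) < 4" by (metis Int_commute oAB)
  have "card (A - B) \<le> 1 \<or> card (B - A) \<le> 1" by (rule cube_SL[OF sepAB oAB])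
  then show "(A, B) \<in> tauQ \<or> (B, A) \<in> tauQ"
  proof
    assume "card (A - B) \<le> 1"
    then have "(A, B) \<in> tauQ" unfolding tauQ_def sep_order_def using sepAB oAB by simp
    then show ?thesis by simp
  next
    assume "card (B - A) \<le> 1"
    then have "(B, A) \<in> tauQ" unfolding tauQ_def sep_order_def using sepBA o by simp
    then show ?thesis by simp
  qed
  assume both: "(A, B) \<in> tauQ \<and> (B, A) \<in> tauQ"
  then have c1: "card (A - B) \<le> 1" and c2: "card (B - A) \<le> 1" unfolding tauQ_def by auto
  have "A \<union> B = cube_V" using sepAB unfolding is_sep_def by blast
  then have eq: "cube_V = ((A - B) \<union> (B - A)) \<union> (A \<inter> B)" by auto
  have "card cube_V \<le> card ((A - B) \<union> (B - A)) + card (A \<inter> B)"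
    by (subst eq) (rule card_Un_le)
  also have "card ((A - B) \<union> (B - A)) \<le> card (A - B) + card (B - A)" by (rule card_Un_le)
  finally have "card cube_V \<le> card (A - B) + card (B - A) + card (A \<inter> B)" by simp
  then show "A = B" using cube_card c1 c2 oAB by simp
next
  show "\<not> (\<exists>A1 B1 A2 B2 A3 B3. (A1, B1) \<in> tauQ \<and> (A2, B2) \<in> tauQ \<and> (A3, B3) \<in> tauQ \<and>
          A1 \<union> A2 \<union> A3 = cube_V \<and>
          (\<forall>u v. cube_E u v \<longrightarrow> (u \<in> A1 \<and> v \<in> A1) \<or> (u \<in> A2 \<and> v \<in> A2) \<or> (u \<in> A3 \<and> v \<in> A3)))"
  proof
    assume "\<exists>A1 B1 A2 B2 A3 B3. (A1, B1) \<in> tauQ \<and> (A2, B2) \<in> tauQ \<and> (A3, B3) \<in> tauQ \<and>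
          A1 \<union> A2 \<union> A3 = cube_V \<and>
          (\<forall>u v. cube_E u v \<longrightarrow> (u \<in> A1 \<and> v \<in> A1) \<or> (u \<in> A2 \<and> v \<in> A2) \<or> (u \<in> A3 \<and> v \<in> A3))"
    then obtain A1 B1 A2 B2 A3 B3 where m: "(A1, B1) \<in> tauQ" "(A2, B2) \<in> tauQ" "(A3, B3) \<in> tauQ"
      and cov: "\<forall>u v. cube_E u v \<longrightarrow> (u \<in> A1 \<and> v \<in> A1) \<or> (u \<in> A2 \<and> v \<in> A2) \<or> (u \<in> A3 \<and> v \<in> A3)"
      by blast
    define Q where "Q (A::cube_vertex set) (b::bool) (c::bool) = ((False, b, c) \<in> A \<and> (True, b, c) \<in> A)" for A b c
    have e: "cube_E (False, b, c) (True, b, c)" for b c by (simp add: cube_E_def)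
    have side: "\<forall>b c b' c'. (b, c) \<noteq> (b', c') \<longrightarrow> \<not> (Q A b c \<and> Q A b' c')"
      if "(A, B) \<in> tauQ" for A B
    proof (intro allI impI)
      fix b c b' c' :: bool assume "(b, c) \<noteq> (b', c')"
      from tauQ_side[OF that this] show "\<not> (Q A b c \<and> Q A b' c')" unfolding Q_def by simp
    qed
    show False
    proof (rule php[of "Q A1" "Q A2" "Q A3"])
      show "\<forall>b c. Q A1 b c \<or> Q A2 b c \<or> Q A3 b c"
      proof (intro allI)
        fix b c
        show "Q A1 b c \<or> Q A2 b c \<or> Q A3 b c"
          using cov[rule_format, OF e[of b c]] unfolding Q_def by simp
      qed
      show "\<forall>b c b' c'. (b, c) \<noteq> (b', c') \<longrightarrow> \<not> (Q A1 b c \<and> Q A1 b' c')" by (rule side[OF m(1)])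
      show "\<forall>b c b' c'. (b, c) \<noteq> (b', c') \<longrightarrow> \<not> (Q A2 b c \<and> Q A2 b' c')" by (rule side[OF m(2)])
      show "\<forall>b c b' c'. (b, c) \<noteq> (b', c') \<longrightarrow> \<not> (Q A3 b c \<and> Q A3 b' c')" by (rule side[OF m(3)])
    qed
  qed
qed

lemma tauQ_unique:
  assumes t: "is_tangle cube_V cube_E 4 \<tau>"
  shows "\<tau> = tauQ"
proof
  show "\<tau> \<subseteq> tauQ"
  proof
    fix s assume s: "s \<in> \<tau>"
    obtain A B where sAB: "s = (A, B)" by (cases s)
    have ab: "(A, B) \<in> \<tau>" using s sAB by simp
    have "is_sep cube_V cube_E A B" "card (A \<inter> B) < 4" using tan_mem[OF t ab] by auto
    moreover have "2 \<le> card (B - A)" using cube_L[OF t ab] .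
    ultimately have "card (A - B) \<le> 1" using cube_SL[of A B] by linarith
    then show "s \<in> tauQ" using \<open>is_sep cube_V cube_E A B\<close> \<open>card (A \<inter> B) < 4\<close> sAB
      unfolding tauQ_def sep_order_def by simp
  qed
  show "tauQ \<subseteq> \<tau>"
  proof
    fix s assume s: "s \<in> tauQ"
    obtain A B where sAB: "s = (A, B)" by (cases s)
    have sep: "is_sep cube_V cube_E A B" and o: "card (A \<inter> B) < 4" and d: "card (A - B) \<le> 1"
      using s sAB unfolding tauQ_def sep_order_def by auto
    have "(A, B) \<in> \<tau>"
    proof (rule ccontr)
      assume "(A, B) \<notin> \<tau>"
      then have "(B, A) \<in> \<tau>" using tan_orient[OF t sep o] by blast
      then have "2 \<le> card (A - B)" by (rule cube_L[OF t])
      then show False using d by simp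
    qed
    then show "s \<in> \<tau>" using sAB by simp
  qed
qed

lemma THE_tauQ: "(THE \<tau>. is_tangle cube_V cube_E 4 \<tau>) = tauQ"
  by (rule the_equality[where P="\<lambda>\<tau>. is_tangle cube_V cube_E 4 \<tau>", OF tauQ_tangle tauQ_unique])


section \<open>Minors\<close>

lemma minor_image_sep:
  assumes g: "graph V E" and mm: "minor_map V E VH EH U f" and sep: "is_sep V E A B"
  shows "is_sep VH EH (f ` (U \<inter> A)) (f ` (U \<inter> B))"
    and "card (f ` (U \<inter> A) \<inter> f ` (U \<inter> B)) \<le> card (A \<inter> B)"
proof -
  have UV: "U \<subseteq> V" and fU: "f ` U = VH"
    and conn: "\<And>x. x \<in> VH \<Longrightarrow> connected_in E {u\<in>U. f u = x}"
    and wit: "\<And>x y. EH x y \<Longrightarrow> \<exists>u v. u \<in> U \<and> v \<in> U \<and> f u = x \<and> f v = y \<and> E u v"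
    using mm unfolding minor_map_def by blast+
  have ABV: "A \<union> B = V" and noe: "\<And>u v. u \<in> A - B \<Longrightarrow> v \<in> B - A \<Longrightarrow> \<not> E u v"
    using sep unfolding is_sep_def by blast+
  show "is_sep VH EH (f ` (U \<inter> A)) (f ` (U \<inter> B))"
    unfolding is_sep_def
  proof (intro conjI allI impI)
    have "f ` (U \<inter> A) \<union> f ` (U \<inter> B) = f ` (U \<inter> (A \<union> B))" by auto
    also have "\<dots> = f ` U" using UV ABV by (simp add: Int_absorb2)
    finally show "f ` (U \<inter> A) \<union> f ` (U \<inter> B) = VH" using fU by simp
    fix x y assume xy: "x \<in> f ` (U \<inter> A) - f ` (U \<inter> B) \<and> y \<in> f ` (U \<inter> B) - f ` (U \<inter> A)"
    show "\<not> EH x y"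
    proof
      assume "EH x y"
      then obtain u v where uv: "u \<in> U" "v \<in> U" "f u = x" "f v = y" "E u v" using wit by blast
      have "u \<notin> B" using uv xy by auto
      then have "u \<in> A - B" using uv UV ABV by auto
      moreover have "v \<notin> A" using uv xy by auto
      then have "v \<in> B - A" using uv UV ABV by auto
      ultimately show False using noe uv(5) by blast
    qed
  qed
  have sub: "f ` (U \<inter> A) \<inter> f ` (U \<inter> B) \<subseteq> f ` (U \<inter> (A \<inter> B))"
  proof
    fix x assume x: "x \<in> f ` (U \<inter> A) \<inter> f ` (U \<inter> B)"
    have "x \<in> f ` (U \<inter> A)" "x \<in> f ` (U \<inter> B)" using x by auto
    then obtain a b where a: "a \<in> U \<inter> A" "x = f a" and b: "b \<in> U \<inter> B" "x = f b" by (meson imageE)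
    then have ab: "a \<in> U" "a \<in> A" "f a = x" "b \<in> U" "b \<in> B" "f b = x" by simp_all
    have xV: "x \<in> VH" using ab fU by auto
    show "x \<in> f ` (U \<inter> (A \<inter> B))"
    proof (rule ccontr)
      assume nx: "x \<notin> f ` (U \<inter> (A \<inter> B))"
      let ?Bx = "{u\<in>U. f u = x}"
      have notin: "u \<notin> A \<inter> B" if "u \<in> ?Bx" for u
      proof
        assume "u \<in> A \<inter> B"
        then have "f u \<in> f ` (U \<inter> (A \<inter> B))" using that by (intro imageI) simp
        then show False using nx that by simp
      qed
      have s1: "?Bx \<subseteq> (A - B) \<union> (B - A)"
      proof
        fix u assume u: "u \<in> ?Bx"
        have "u \<in> A \<union> B" using u UV ABV by blast
        then show "u \<in> (A - B) \<union> (B - A)" using notin[OF u] by blast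
      qed
      have aB: "a \<in> ?Bx" "b \<in> ?Bx" using ab by simp_all
      have aa: "a \<in> A - B" using notin[OF aB(1)] ab(2) by blast
      have bb: "b \<in> B - A" using notin[OF aB(2)] ab(5) by blast
      have a2: "a \<in> ?Bx" "b \<in> ?Bx" using ab by auto
      have dd: "(A - B) \<inter> (B - A) = {}" by blast
      show False
        by (rule conn_sep[OF conn[OF xV] s1 noe dd a2(1) aa a2(2) bb])
    qed
  qed
  have finV: "finite V" using g unfolding graph_def by blast
  have finU: "finite U" using finite_subset[OF UV finV] .
  have finAB: "finite (A \<inter> B)" using finite_subset[of "A \<inter> B" V] finV ABV by blast
  have "card (f ` (U \<inter> A) \<inter> f ` (U \<inter> B)) \<le> card (f ` (U \<inter> (A \<inter> B)))"
    by (rule card_mono[OF _ sub]) (simp add: finU)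
  also have "\<dots> \<le> card (U \<inter> (A \<inter> B))" by (rule card_image_le) (simp add: finU)
  also have "\<dots> \<le> card (A \<inter> B)"
    by (rule card_mono[OF finAB]) blast
  finally show "card (f ` (U \<inter> A) \<inter> f ` (U \<inter> B)) \<le> card (A \<inter> B)" .
qed

lemma lift_tangle:
  assumes g: "graph V E" and gH: "graph VH EH" and mm: "minor_map V E VH EH U f"
    and tH: "is_tangle VH EH k \<tau>H"
  shows "is_tangle V E k (lift V E U f k \<tau>H)"
  unfolding is_tangle_def
proof (intro conjI allI impI)
  have UV: "U \<subseteq> V" and fU: "f ` U = VH"
    and wit: "\<And>x y. EH x y \<Longrightarrow> \<exists>u v. u \<in> U \<and> v \<in> U \<and> f u = x \<and> f v = y \<and> E u v"
    using mm unfolding minor_map_def by blast+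
  have symG: "\<And>u v. E u v \<Longrightarrow> E v u" and inV: "\<And>u v. E u v \<Longrightarrow> u \<in> V \<and> v \<in> V"
    using g unfolding graph_def by blast+
  have inVH: "\<And>u v. EH u v \<Longrightarrow> u \<in> VH \<and> v \<in> VH"
    using gH unfolding graph_def by blast+
  show "\<forall>s\<in>lift V E U f k \<tau>H. is_sep V E (fst s) (snd s) \<and> sep_order s < k"
    unfolding lift_def by auto
  fix A B assume AB: "is_sep V E A B \<and> card (A \<inter> B) < k"
  have sepAB: "is_sep V E A B" and oAB: "card (A \<inter> B) < k" using AB by auto
  have sepBA: "is_sep V E B A" unfolding is_sep_def
  proof (intro conjI allI impI)
    show "B \<union> A = V" using sepAB unfolding is_sep_def by auto
    fix u v assume uv: "u \<in> B - A \<and> v \<in> A - B"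
    have vu: "v \<in> A - B" "u \<in> B - A" using uv by auto
    have "\<not> E v u" using sepAB vu unfolding is_sep_def by meson
    then show "\<not> E u v" using symG by blast
  qed
  have oBA: "card (B \<inter> A) < k" by (metis Int_commute oAB)
  have isep: "is_sep VH EH (f ` (U \<inter> A)) (f ` (U \<inter> B))" using minor_image_sep(1)[OF g mm sepAB] .
  have io: "card (f ` (U \<inter> A) \<inter> f ` (U \<inter> B)) < k"
    using minor_image_sep(2)[OF g mm sepAB] oAB by linarith
  have orient: "(f ` (U \<inter> A), f ` (U \<inter> B)) \<in> \<tau>H \<or> (f ` (U \<inter> B), f ` (U \<inter> A)) \<in> \<tau>H"
    by (rule tan_orient[OF tH isep io])
  have memAB: "(A, B) \<in> lift V E U f k \<tau>H \<longleftrightarrow> (f ` (U \<inter> A), f ` (U \<inter> B)) \<in> \<tau>H"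
    unfolding lift_def minor_image_def sep_order_def using sepAB oAB by simp
  have memBA: "(B, A) \<in> lift V E U f k \<tau>H \<longleftrightarrow> (f ` (U \<inter> B), f ` (U \<inter> A)) \<in> \<tau>H"
    unfolding lift_def minor_image_def sep_order_def using sepBA oBA by simp
  show "(A, B) \<in> lift V E U f k \<tau>H \<or> (B, A) \<in> lift V E U f k \<tau>H"
    using orient memAB memBA by blast
  assume both: "(A, B) \<in> lift V E U f k \<tau>H \<and> (B, A) \<in> lift V E U f k \<tau>H"
  then have b1: "(f ` (U \<inter> A), f ` (U \<inter> B)) \<in> \<tau>H" and b2: "(f ` (U \<inter> B), f ` (U \<inter> A)) \<in> \<tau>H"
    using memAB memBA by auto
  have "\<forall>A B. is_sep VH EH A B \<and> card (A \<inter> B) < k \<longrightarrow>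
        ((A, B) \<in> \<tau>H \<or> (B, A) \<in> \<tau>H) \<and> ((A, B) \<in> \<tau>H \<and> (B, A) \<in> \<tau>H \<longrightarrow> A = B)"
    using tH unfolding is_tangle_def by simp
  then have "f ` (U \<inter> A) = f ` (U \<inter> B)" using isep io b1 b2 by simp
  moreover have "f ` (U \<inter> A) \<union> f ` (U \<inter> B) = VH" using isep unfolding is_sep_def by blast
  ultimately have "VH \<subseteq> f ` (U \<inter> A)" by auto
  then show "A = B" using tan_notV[OF gH tH b1] by blast
next
  have UV: "U \<subseteq> V" and fU: "f ` U = VH"
    and wit: "\<And>x y. EH x y \<Longrightarrow> \<exists>u v. u \<in> U \<and> v \<in> U \<and> f u = x \<and> f v = y \<and> E u v"
    using mm unfolding minor_map_def by blast+
  show "\<not> (\<exists>A1 B1 A2 B2 A3 B3. (A1, B1) \<in> lift V E U f k \<tau>H \<and> (A2, B2) \<in> lift V E U f k \<tau>H \<and>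
      (A3, B3) \<in> lift V E U f k \<tau>H \<and> A1 \<union> A2 \<union> A3 = V \<and>
      (\<forall>u v. E u v \<longrightarrow> u \<in> A1 \<and> v \<in> A1 \<or> u \<in> A2 \<and> v \<in> A2 \<or> u \<in> A3 \<and> v \<in> A3))"
  proof
    assume "\<exists>A1 B1 A2 B2 A3 B3. (A1, B1) \<in> lift V E U f k \<tau>H \<and> (A2, B2) \<in> lift V E U f k \<tau>H \<and>
      (A3, B3) \<in> lift V E U f k \<tau>H \<and> A1 \<union> A2 \<union> A3 = V \<and>
      (\<forall>u v. E u v \<longrightarrow> u \<in> A1 \<and> v \<in> A1 \<or> u \<in> A2 \<and> v \<in> A2 \<or> u \<in> A3 \<and> v \<in> A3)"
    then obtain A1 B1 A2 B2 A3 B3 where m: "(A1, B1) \<in> lift V E U f k \<tau>H" "(A2, B2) \<in> lift V E U f k \<tau>H"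
      "(A3, B3) \<in> lift V E U f k \<tau>H" and cV: "A1 \<union> A2 \<union> A3 = V"
      and cE: "\<forall>u v. E u v \<longrightarrow> u \<in> A1 \<and> v \<in> A1 \<or> u \<in> A2 \<and> v \<in> A2 \<or> u \<in> A3 \<and> v \<in> A3"
      by blast
    have i1: "(f ` (U \<inter> A1), f ` (U \<inter> B1)) \<in> \<tau>H" using m(1) unfolding lift_def minor_image_def by simp
    have i2: "(f ` (U \<inter> A2), f ` (U \<inter> B2)) \<in> \<tau>H" using m(2) unfolding lift_def minor_image_def by simp
    have i3: "(f ` (U \<inter> A3), f ` (U \<inter> B3)) \<in> \<tau>H" using m(3) unfolding lift_def minor_image_def by simp
    show False
    proof (rule tan_cover[OF tH i1 i2 i3])
      show "f ` (U \<inter> A1) \<union> f ` (U \<inter> A2) \<union> f ` (U \<inter> A3) = VH"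
      proof
        show "f ` (U \<inter> A1) \<union> f ` (U \<inter> A2) \<union> f ` (U \<inter> A3) \<subseteq> VH" using fU by auto
        show "VH \<subseteq> f ` (U \<inter> A1) \<union> f ` (U \<inter> A2) \<union> f ` (U \<inter> A3)"
        proof
          fix x assume "x \<in> VH"
          then obtain u where u: "u \<in> U" "f u = x" using fU by auto
          then have "u \<in> A1 \<union> A2 \<union> A3" using UV cV by auto
          then show "x \<in> f ` (U \<inter> A1) \<union> f ` (U \<inter> A2) \<union> f ` (U \<inter> A3)" using u by auto
        qed
      qed
      fix x y assume "EH x y"
      then obtain u v where uv: "u \<in> U" "v \<in> U" "f u = x" "f v = y" "E u v" using wit by blast
      have "u \<in> A1 \<and> v \<in> A1 \<or> u \<in> A2 \<and> v \<in> A2 \<or> u \<in> A3 \<and> v \<in> A3" using cE uv(5) by simp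
      moreover have "u \<in> Ai \<Longrightarrow> x \<in> f ` (U \<inter> Ai)" "v \<in> Ai \<Longrightarrow> y \<in> f ` (U \<inter> Ai)" for Ai
        using uv by auto
      ultimately show "x \<in> f ` (U \<inter> A1) \<and> y \<in> f ` (U \<inter> A1) \<or> x \<in> f ` (U \<inter> A2) \<and> y \<in> f ` (U \<inter> A2) \<or>
          x \<in> f ` (U \<inter> A3) \<and> y \<in> f ` (U \<inter> A3)" by blast
    qed
  qed
qed


section \<open>Cube combinatorics for standard minors\<close>

definition anti :: "cube_vertex \<Rightarrow> cube_vertex" where
  "anti v = (case v of (a, b, c) \<Rightarrow> (\<not> a, \<not> b, \<not> c))"

lemma cubeB_iff: "x \<in> cube_B \<longleftrightarrow> x \<notin> cube_A"
  unfolding cube_B_def cube_V_def by simp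

lemma cube_anti_all: "\<forall>x. x \<in> cube_A \<longrightarrow> anti x \<notin> cube_A \<and> \<not> cube_E x (anti x)"
  by (simp add: cube_A_def anti_def cube_E_def split_paired_All all_bool_eq)

lemma cube_anti: "x \<in> cube_A \<Longrightarrow> anti x \<in> cube_B" "x \<in> cube_A \<Longrightarrow> \<not> cube_E x (anti x)"
  using cube_anti_all cubeB_iff by blast+

lemma anti_inj: "anti x = anti y \<Longrightarrow> x = y"
  unfolding anti_def by (cases x; cases y) auto

lemma cube_unique_cl: "\<forall>a\<in>set cl. \<forall>b\<in>set cl. a \<in> cube_A \<longrightarrow> b \<notin> cube_A \<longrightarrow> \<not> cube_E a b \<longrightarrow> b = anti a"
  by code_simp

lemma cube_unique_all: "\<forall>a b. a \<in> cube_A \<longrightarrow> b \<notin> cube_A \<longrightarrow> \<not> cube_E a b \<longrightarrow> b = anti a"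
  using cube_unique_cl unfolding set_cl by blast

lemma cube_unique: "a \<in> cube_A \<Longrightarrow> b \<in> cube_B \<Longrightarrow> \<not> cube_E a b \<Longrightarrow> b = anti a"
  using cube_unique_all cubeB_iff by blast

lemma cube_bip_cl: "\<forall>x\<in>set cl. \<forall>y\<in>set cl. cube_E x y \<longrightarrow> (x \<in> cube_A \<longleftrightarrow> y \<notin> cube_A)"
  by code_simp

lemma cube_bip_all: "\<forall>x y. cube_E x y \<longrightarrow> (x \<in> cube_A \<longleftrightarrow> y \<notin> cube_A)"
  using cube_bip_cl unfolding set_cl by blast

lemma cube_bip: "cube_E x y \<Longrightarrow> (x \<in> cube_A \<longleftrightarrow> y \<notin> cube_A)"
  using cube_bip_all by blast

lemma cubeB_card: "card cube_B = 4"
proof -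
  have eq: "cube_B = {(True,False,False),(False,True,False),(False,False,True),(True,True,True)}"
    unfolding cubeB_iff[abs_def] by (auto simp: cube_A_def cube_B_def cube_V_def)
  show ?thesis unfolding eq by simp
qed

lemma Diff_single_eq: "p \<in> X \<Longrightarrow> q \<in> X \<Longrightarrow> X - {p} = X - {q} \<Longrightarrow> p = q"
  by blast

lemma std_tauQ:
  assumes g: "graph V E" and std: "std_cube_minor V E X U f" and sep: "is_sep V E A B"
    and c3: "card (A \<inter> B) = 3" and XB: "X \<subseteq> B"
  shows "minor_image U f (A, B) \<in> tauQ"
proof -
  have mm: "minor_map V E cube_V cube_E U f" using std unfolding std_cube_minor_def by blast
  obtain g0 where bij: "bij_betw g0 cube_B X"
    and sing: "\<forall>b\<in>cube_B. {u\<in>U. f u = b} = {g0 b}"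
    and comp: "\<forall>a\<in>cube_A. \<forall>b\<in>cube_B. \<not> cube_E a b \<longrightarrow>
            is_component V E X {u\<in>U. f u = a} \<and> nbhd V E {u\<in>U. f u = a} = X - {g0 b}"
    using std unfolding std_cube_minor_def by blast
  have UV: "U \<subseteq> V" using mm unfolding minor_map_def by blast
  have cX: "card X = 4" using bij_betw_same_card[OF bij] cubeB_card by simp
  have finX: "finite X" using cX by (metis card.infinite zero_neq_numeral)
  have inj: "inj_on g0 cube_B" and g0X: "\<And>b. b \<in> cube_B \<Longrightarrow> g0 b \<in> X"
    using bij unfolding bij_betw_def by auto
  have ABV: "A \<union> B = V" and noe: "\<And>u v. u \<in> A - B \<Longrightarrow> v \<in> B - A \<Longrightarrow> \<not> E u v"
    using sep unfolding is_sep_def by blast+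
  have finV: "finite V" using g unfolding graph_def by blast
  have finAB: "finite (A \<inter> B)" using finite_subset[of "A \<inter> B" V] finV ABV by blast
  have isep: "is_sep cube_V cube_E (f ` (U \<inter> A)) (f ` (U \<inter> B))"
    using minor_image_sep(1)[OF g mm sep] .
  have io: "card (f ` (U \<inter> A) \<inter> f ` (U \<inter> B)) < 4"
    using minor_image_sep(2)[OF g mm sep] c3 by linarith
  have key: "x \<in> cube_A \<and> A \<inter> B = X - {g0 (anti x)}" if x: "x \<in> f ` (U \<inter> A) - f ` (U \<inter> B)" for x
  proof -
    have br: "u \<in> A - B" if u: "u \<in> U" "f u = x" for u
    proof -
      have "u \<notin> B"
      proof
        assume "u \<in> B"
        then have "f u \<in> f ` (U \<inter> B)" using u by (intro imageI) simp
        then show False using x u by simp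
      qed
      moreover have "u \<in> A \<union> B" using u UV ABV by blast
      ultimately show ?thesis by blast
    qed
    have xA: "x \<in> cube_A"
    proof (rule ccontr)
      assume "x \<notin> cube_A"
      then have xB: "x \<in> cube_B" using cubeB_iff by simp
      then have "g0 x \<in> {u\<in>U. f u = x}" using sing by blast
      then have "g0 x \<in> A - B" using br by blast
      moreover have "g0 x \<in> B" using g0X[OF xB] XB by blast
      ultimately show False by blast
    qed
    let ?C = "{u\<in>U. f u = x}"
    have C: "is_component V E X ?C" and nC: "nbhd V E ?C = X - {g0 (anti x)}"
      using comp xA cube_anti[OF xA] by blast+
    have CAB: "?C \<subseteq> A - B" using br by blast
    have "nbhd V E ?C \<subseteq> A \<inter> B"
    proof
      fix w assume w: "w \<in> nbhd V E ?C"
      then obtain u where u: "u \<in> ?C" "E u w" "w \<in> V" unfolding nbhd_def by auto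
      have "u \<in> A - B" using CAB u(1) by blast
      then have "w \<in> A" using noe[of u w] u ABV by blast
      moreover have "w \<in> B" using nbhd_sub_X[OF g C] w XB by blast
      ultimately show "w \<in> A \<inter> B" by simp
    qed
    moreover have "card (X - {g0 (anti x)}) = 3"
      using g0X[OF cube_anti(1)[OF xA]] cX finX by (simp add: card_Diff_singleton)
    ultimately have "A \<inter> B = X - {g0 (anti x)}"
      using card_subset_eq[OF finAB] c3 nC by metis
    then show ?thesis using xA by simp
  qed
  have "card (f ` (U \<inter> A) - f ` (U \<inter> B)) \<le> Suc 0"
  proof (subst card_le_Suc0_iff_eq)
    show "finite (f ` (U \<inter> A) - f ` (U \<inter> B))" by simp
    show "\<forall>a1\<in>f ` (U \<inter> A) - f ` (U \<inter> B). \<forall>a2\<in>f ` (U \<inter> A) - f ` (U \<inter> B). a1 = a2"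
    proof (intro ballI)
      fix x y assume x: "x \<in> f ` (U \<inter> A) - f ` (U \<inter> B)" and y: "y \<in> f ` (U \<inter> A) - f ` (U \<inter> B)"
      have kx: "x \<in> cube_A" "A \<inter> B = X - {g0 (anti x)}" using key[OF x] by auto
      have ky: "y \<in> cube_A" "A \<inter> B = X - {g0 (anti y)}" using key[OF y] by auto
      have "g0 (anti x) = g0 (anti y)"
        by (rule Diff_single_eq[of _ X]) (use kx ky g0X cube_anti in auto)
      then have "anti x = anti y" using inj cube_anti(1) kx(1) ky(1) by (meson inj_onD)
      then show "x = y" by (rule anti_inj)
    qed
  qed
  then show ?thesis
    unfolding tauQ_def minor_image_def sep_order_def using isep io by simp
qed


lemma cubic_std:
  assumes g: "graph V E" and cub: "cubic V E X"
  shows "\<exists>U f. std_cube_minor V E X U f"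
proof -
  have XV: "X \<subseteq> V" and cX: "card X = 4"
    and nbs: "{nbhd V E C | C. is_component V E X C} = {S. S \<subseteq> X \<and> card S = 3}"
    using cub unfolding cubic_def by blast+
  have finX: "finite X" using cX by (metis card.infinite zero_neq_numeral)
  have sym: "\<And>u v. E u v \<Longrightarrow> E v u" using g unfolding graph_def by blast
  have finB: "finite cube_B" by simp
  obtain g0 where bij: "bij_betw g0 cube_B X"
    using finite_same_card_bij[OF finB finX] cubeB_card cX by auto
  have inj: "inj_on g0 cube_B" and img: "g0 ` cube_B = X" using bij unfolding bij_betw_def by auto
  have g0X: "\<And>b. b \<in> cube_B \<Longrightarrow> g0 b \<in> X" using img by blast
  have exC: "\<exists>C. is_component V E X C \<and> nbhd V E C = X - {g0 (anti a)}" if a: "a \<in> cube_A" for a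
  proof -
    have p: "g0 (anti a) \<in> X" using g0X cube_anti(1)[OF a] .
    have "card (X - {g0 (anti a)}) = 3" using p cX finX by (simp add: card_Diff_singleton)
    then have "X - {g0 (anti a)} \<in> {S. S \<subseteq> X \<and> card S = 3}" by blast
    then have "X - {g0 (anti a)} \<in> {nbhd V E C | C. is_component V E X C}" using nbs by simp
    then show ?thesis by auto
  qed
  define Cm where "Cm a = (SOME C. is_component V E X C \<and> nbhd V E C = X - {g0 (anti a)})" for a
  have Cm: "is_component V E X (Cm a) \<and> nbhd V E (Cm a) = X - {g0 (anti a)}" if "a \<in> cube_A" for a
    unfolding Cm_def by (rule someI_ex[OF exC[OF that]])
  have CmX: "Cm a \<subseteq> V - X" if "a \<in> cube_A" for a using Cm[OF that] unfolding is_component_def by blast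
  have Cm_ne: "Cm a \<noteq> {}" if "a \<in> cube_A" for a
    using Cm[OF that] unfolding is_component_def connected_in_def by blast
  have Cm_disj: "a = a'" if a: "a \<in> cube_A" "a' \<in> cube_A" and u: "u \<in> Cm a" "u \<in> Cm a'" for a a' u
  proof -
    have "Cm a = Cm a'" using comp_eq[OF g] Cm[OF a(1)] Cm[OF a(2)] u by blast
    then have "X - {g0 (anti a)} = X - {g0 (anti a')}" using Cm[OF a(1)] Cm[OF a(2)] by simp
    then have "g0 (anti a) = g0 (anti a')"
      using Diff_single_eq[of "g0 (anti a)" X "g0 (anti a')"] g0X cube_anti(1) a by blast
    then have "anti a = anti a'" using inj cube_anti(1) a by (meson inj_onD)
    then show ?thesis by (rule anti_inj)
  qed
  define U where "U = X \<union> \<Union>(Cm ` cube_A)"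
  define f where "f u = (if u \<in> X then inv_into cube_B g0 u else (SOME a. a \<in> cube_A \<and> u \<in> Cm a))" for u
  have fX: "f u \<in> cube_B \<and> g0 (f u) = u" if "u \<in> X" for u
  proof -
    have "u \<in> g0 ` cube_B" using that img by simp
    then show ?thesis unfolding f_def using that by (simp add: inv_into_into f_inv_into_f)
  qed
  have fC: "f u = a" if a: "a \<in> cube_A" and u: "u \<in> Cm a" for a u
  proof -
    have "u \<notin> X" using CmX[OF a] u by blast
    then have fu: "f u = (SOME a. a \<in> cube_A \<and> u \<in> Cm a)" unfolding f_def by simp
    have "(SOME a. a \<in> cube_A \<and> u \<in> Cm a) \<in> cube_A \<and> u \<in> Cm (SOME a. a \<in> cube_A \<and> u \<in> Cm a)"
      by (rule someI[of _ a]) (use a u in simp)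
    then show ?thesis using fu Cm_disj a u by metis
  qed
  have UV: "U \<subseteq> V" unfolding U_def using XV CmX by blast
  have AB: "\<not> (x \<in> cube_A \<and> x \<in> cube_B)" for x using cubeB_iff by simp
  have brB: "{u\<in>U. f u = b} = {g0 b}" if b: "b \<in> cube_B" for b
  proof
    have "g0 b \<in> X" using g0X[OF b] .
    moreover have "f (g0 b) = b" unfolding f_def using g0X[OF b] inv_into_f_f[OF inj b] by simp
    ultimately show "{g0 b} \<subseteq> {u\<in>U. f u = b}" unfolding U_def by simp
    show "{u\<in>U. f u = b} \<subseteq> {g0 b}"
    proof
      fix u assume u: "u \<in> {u\<in>U. f u = b}"
      show "u \<in> {g0 b}"
      proof (cases "u \<in> X")
        case True
        then have "g0 (f u) = u" using fX by blast
        then show ?thesis using u by simp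
      next
        case False
        then obtain a where a: "a \<in> cube_A" "u \<in> Cm a" using u unfolding U_def by blast
        then have "f u = a" by (rule fC)
        then show ?thesis using u a AB b by simp
      qed
    qed
  qed
  have brA: "{u\<in>U. f u = a} = Cm a" if a: "a \<in> cube_A" for a
  proof
    show "Cm a \<subseteq> {u\<in>U. f u = a}" using fC[OF a] a unfolding U_def by blast
    show "{u\<in>U. f u = a} \<subseteq> Cm a"
    proof
      fix u assume u: "u \<in> {u\<in>U. f u = a}"
      show "u \<in> Cm a"
      proof (cases "u \<in> X")
        case True
        then have "f u \<in> cube_B" using fX by blast
        then show ?thesis using u a AB by simp
      next
        case False
        then obtain a' where a': "a' \<in> cube_A" "u \<in> Cm a'" using u unfolding U_def by blast
        then have "f u = a'" by (rule fC)
        then show ?thesis using u a' by simp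
      qed
    qed
  qed
  have mm: "minor_map V E cube_V cube_E U f"
    unfolding minor_map_def
  proof (intro conjI ballI allI impI)
    show "U \<subseteq> V" by (rule UV)
    show "f ` U = cube_V"
    proof
      show "f ` U \<subseteq> cube_V" unfolding cube_V_def by simp
      show "cube_V \<subseteq> f ` U"
      proof
        fix x assume "x \<in> cube_V"
        show "x \<in> f ` U"
        proof (cases "x \<in> cube_A")
          case True
          then obtain u where "u \<in> Cm x" using Cm_ne by blast
          then have "u \<in> {u\<in>U. f u = x}" using brA[OF True] by simp
          then show ?thesis by (auto intro: rev_image_eqI)
        next
          case False
          then have "x \<in> cube_B" using cubeB_iff by simp
          then have "g0 x \<in> {u\<in>U. f u = x}" using brB by simp
          then show ?thesis by (auto intro: rev_image_eqI)
        qed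
      qed
    qed
    fix x assume "x \<in> cube_V"
    show "connected_in E {u\<in>U. f u = x}"
    proof (cases "x \<in> cube_A")
      case True
      then show ?thesis using brA[OF True] Cm[OF True] unfolding is_component_def by simp
    next
      case False
      then have "x \<in> cube_B" using cubeB_iff by simp
      then show ?thesis using brB conn_single by simp
    qed
  next
    fix x y assume e: "cube_E x y"
    show "\<exists>u v. u \<in> U \<and> v \<in> U \<and> f u = x \<and> f v = y \<and> E u v"
    proof (cases "x \<in> cube_A")
      case True
      then have yB: "y \<in> cube_B" using cube_bip[OF e] cubeB_iff by simp
      have "y \<noteq> anti x" using cube_anti(2)[OF True] e by blast
      then have "g0 y \<noteq> g0 (anti x)" using inj yB cube_anti(1)[OF True] by (meson inj_onD)
      then have "g0 y \<in> nbhd V E (Cm x)" using Cm[OF True] g0X[OF yB] by simp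
      then obtain u where u: "u \<in> Cm x" "E u (g0 y)" unfolding nbhd_def by blast
      have "u \<in> U" "g0 y \<in> U" using u(1) True g0X[OF yB] unfolding U_def by blast+
      moreover have "f u = x" "f (g0 y) = y" using fC[OF True u(1)] brB[OF yB] by auto
      ultimately show ?thesis using u(2) by blast
    next
      case False
      then have xB: "x \<in> cube_B" using cubeB_iff by simp
      have yA: "y \<in> cube_A" using cube_bip[OF e] False by simp
      have e': "cube_E y x" using cube_graph e unfolding graph_def by blast
      have "x \<noteq> anti y" using cube_anti(2)[OF yA] e' by blast
      then have "g0 x \<noteq> g0 (anti y)" using inj xB cube_anti(1)[OF yA] by (meson inj_onD)
      then have "g0 x \<in> nbhd V E (Cm y)" using Cm[OF yA] g0X[OF xB] by simp
      then obtain u where u: "u \<in> Cm y" "E u (g0 x)" unfolding nbhd_def by blast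
      have "u \<in> U" "g0 x \<in> U" using u(1) yA g0X[OF xB] unfolding U_def by blast+
      moreover have "f u = y" "f (g0 x) = x" using fC[OF yA u(1)] brB[OF xB] by auto
      ultimately show ?thesis using sym[OF u(2)] by blast
    qed
  qed
  have "std_cube_minor V E X U f"
    unfolding std_cube_minor_def
  proof (intro conjI exI[of _ g0])
    show "minor_map V E cube_V cube_E U f" by (rule mm)
    show "bij_betw g0 cube_B X" by (rule bij)
    show "\<forall>b\<in>cube_B. {u\<in>U. f u = b} = {g0 b}" using brB by blast
    show "\<forall>a\<in>cube_A. \<forall>b\<in>cube_B. \<not> cube_E a b \<longrightarrow>
            is_component V E X {u\<in>U. f u = a} \<and> nbhd V E {u\<in>U. f u = a} = X - {g0 b}"
    proof (intro ballI impI)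
      fix a b assume a: "a \<in> cube_A" and b: "b \<in> cube_B" and ne: "\<not> cube_E a b"
      have "b = anti a" by (rule cube_unique[OF a b ne])
      then show "is_component V E X {u\<in>U. f u = a} \<and> nbhd V E {u\<in>U. f u = a} = X - {g0 b}"
        using brA[OF a] Cm[OF a] by simp
    qed
  qed
  then show ?thesis by blast
qed


theorem mainTheorem4:
  fixes V :: "'a set" and E :: "'a \<Rightarrow> 'a \<Rightarrow> bool" and \<sigma> :: "('a set \<times> 'a set) set"
  assumes "graph V E"
    and "k_connected 3 V E"
    and "\<forall>s\<in>\<sigma>. is_sep V E (fst s) (snd s) \<and> sep_order s = 3"
    and "is_star \<sigma>"
    and "card (bag V \<sigma>) = 4"
  shows "((\<exists>\<tau>. is_tangle V E 4 \<tau> \<and> \<sigma> \<subseteq> \<tau>) \<longleftrightarrow> cubic V E (bag V \<sigma>)) \<and>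
         (cubic V E (bag V \<sigma>) \<longleftrightarrow>
            cubic V E (bag V \<sigma>) \<and>
            (\<forall>U f. std_cube_minor V E (bag V \<sigma>) U f \<longrightarrow>
               \<sigma> \<subseteq> lift V E U f 4 (THE \<tau>. is_tangle cube_V cube_E 4 \<tau>)))"
proof -
  have g: "graph V E" using assms(1) .
  have i_ii: "cubic V E (bag V \<sigma>)" if ex: "\<exists>\<tau>. is_tangle V E 4 \<tau> \<and> \<sigma> \<subseteq> \<tau>"
  proof -
    obtain \<tau> where t: "is_tangle V E 4 \<tau>" and sub: "\<sigma> \<subseteq> \<tau>" using ex by blast
    show ?thesis by (rule tangle_cubic[OF assms(1) assms(2) assms(3) assms(4) assms(5) t sub])
  qed
  have ii_iii: "\<forall>U f. std_cube_minor V E (bag V \<sigma>) U f \<longrightarrow>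
               \<sigma> \<subseteq> lift V E U f 4 (THE \<tau>. is_tangle cube_V cube_E 4 \<tau>)"
  proof (intro allI impI subsetI)
    fix U f s assume std: "std_cube_minor V E (bag V \<sigma>) U f" and s: "s \<in> \<sigma>"
    obtain A B where sAB: "s = (A, B)" by (cases s)
    have sep: "is_sep V E A B" and o: "card (A \<inter> B) = 3"
      using assms(3) s sAB unfolding sep_order_def by auto
    have XB: "bag V \<sigma> \<subseteq> B" using s sAB unfolding bag_def by force
    have "minor_image U f (A, B) \<in> tauQ" by (rule std_tauQ[OF g std sep o XB])
    then show "s \<in> lift V E U f 4 (THE \<tau>. is_tangle cube_V cube_E 4 \<tau>)"
      unfolding THE_tauQ lift_def sep_order_def using sAB sep o by simp
  qed
  have iii_i: "\<exists>\<tau>. is_tangle V E 4 \<tau> \<and> \<sigma> \<subseteq> \<tau>" if cub: "cubic V E (bag V \<sigma>)"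
  proof -
    obtain U f where std: "std_cube_minor V E (bag V \<sigma>) U f" using cubic_std[OF g cub] by blast
    have mm: "minor_map V E cube_V cube_E U f" using std unfolding std_cube_minor_def by blast
    have "is_tangle V E 4 (lift V E U f 4 tauQ)"
      by (rule lift_tangle[OF g cube_graph mm tauQ_tangle])
    moreover have "\<sigma> \<subseteq> lift V E U f 4 tauQ" using ii_iii std THE_tauQ by simp
    ultimately show ?thesis by blast
  qed
  show ?thesis using i_ii ii_iii iii_i by blast
qed

end
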